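(* For any digraph $G$, \[1+\mathrm{cr}(G)=\mathrm{lifo}_{\mathtt{mi}}(G)=\mathrm{lifo}_{\mathtt{i}}(G)=\mathrm{lifo}_{\mathtt{misc}}(G)=\mathrm{lifo}_{\mathtt{isc}}(G)=\mathrm{lifo}_{\mathtt{mv}}(G)=\mathrm{lifo}_{\mathtt{v}}(G)=\mathrm{lifo}_{\mathtt{mvsc}}(G)=\mathrm{lifo}_{\mathtt{vsc}}(G)=\mathrm{sstat}_{\mathtt{vsc}}(G).\]
   Context: All digraphs are finite, simple, without self-loops and have at least one vertex (induced subgraphs appearing as game data may be empty). For a finite set $V$, $V^*$ is the set of finite words over $V$, $\epsilon$ the empty word; $X \preceq Y$ means $X$ is a prefix of $Y$; for $X=a_1\cdots a_n$, $|X|=n$ and $\mathrm{let}(X)=\{a_1,\dots,a_n\}$. $A\Delta B$ is symmetric difference. For $X\subseteq V(G)$, $G\setminus X$ is the subgraph induced by $V(G)\setminus X$. Induced subgraphs are identified with their vertex sets. An initial component of a digraph $H$ is a strongly connected component $C$ with no edge from $H\setminus C$ into $C$. A subgraph $H\subseteq G$ is successor-closed if there is no edge of $G$ from $H$ to $G\setminus H$. Cycle-rank $\mathrm{cr}(G)$: $0$ if $G$ is acyclic; $1+\min_{v\in V(G)}\mathrm{cr}(G\setminus\{v\})$ if $G$ is strongly connected (and not acyclic); otherwise the maximum of $\mathrm{cr}(H)$ over strongly connected components $H$ of $G$. LIFO-search game. A position is a pair $(X,R)$ with $X\in V(G)^*$ and $R$ a (possibly empty) induced subgraph of $G\setminus\mathrm{let}(X)$.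 It is an $\mathtt{i}$-position if $R$ is successor-closed; an $\mathtt{isc}$-position if $R$ is a union of strongly connected components of $G\setminus\mathrm{let}(X)$; a $\mathtt{v}$-position if $R$ is successor-closed and has a unique initial component; a $\mathtt{vsc}$-position if $R$ is a strongly connected component of $G\setminus\mathrm{let}(X)$. For $\mathbf{gv}\in\{\mathtt{i},\mathtt{isc},\mathtt{v},\mathtt{vsc}\}$, a $\mathbf{gv}$-position $(X',R')$ is a $\mathbf{gv}$-successor of $(X,R)$ if ($X\preceq X'$ or $X'\preceq X$), $|\mathrm{let}(X)\Delta\mathrm{let}(X')|=1$, and: for $\mathbf{gv}\in\{\mathtt{i},\mathtt{v}\}$, every $v'\in R'$ is reachable by a directed path in $G\setminus(\mathrm{let}(X)\cap\mathrm{let}(X'))$ from some $v\in R$; for $\mathbf{gv}\in\{\mathtt{isc},\mathtt{vsc}\}$, every $v'\in R'$ lies in the same strongly connected component of $G\setminus(\mathrm{let}(X)\cap\mathrm{let}(X'))$ as some $v\in R$. For $\mathbf{gv}\in\{\mathtt{v},\mathtt{vsc}\}$, if $(\epsilon,G)$ is not a $\mathbf{gv}$-position it is nevertheless admitted as a special position whose $\mathbf{gv}$-successors are exactly the $\mathbf{gv}$-positions of the form $(\epsilon,R)$. A $\mathbf{gv}$-search from $(X_0,R_0)$ is a finite or infinite sequence of $\mathbf{gv}$-positions $(X_0,R_0),(X_1,R_1),\dots$ with each $(X_{i+1},R_{i+1})$ a $\mathbf{gv}$-successor of $(X_i,R_i)$; it is complete if it is infinite or $R_n=\emptyset$ for some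 $n$, and a complete search is winning for the searchers if $R_n=\emptyset$ for some $n$. A complete search from $(\epsilon,G)$ is monotone if $R_{i+1}\subseteq R_i$ for all $i$; searcher-stationary if $X_i\preceq X_{i+1}$ for all $i$ with $R_i\neq\emptyset$; uses at most $k$ searchers if $|X_i|\le k$ for all $i$. A (searcher) $\mathbf{gv}$-strategy is a function $\sigma$ from $\mathbf{gv}$-positions to $V(G)^*$ such that $\sigma(X,R)$ is the first component of some $\mathbf{gv}$-successor of $(X,R)$; a search is consistent with $\sigma$ if $X_{i+1}=\sigma(X_i,R_i)$ for all $i$. $\sigma$ is winning if every complete consistent search from $(\epsilon,G)$ is winning for the searchers; it is monotone / searcher-stationary / uses at most $k$ searchers if every complete consistent search from $(\epsilon,G)$ has that property. $\mathrm{lifo}_{\mathbf{gv}}(G)$ (resp. $\mathrm{lifo}_{\mathtt{m}\mathbf{gv}}(G)$) is the minimum $k$ such that there is a winning (resp. monotone winning) $\mathbf{gv}$-strategy using at most $k$ searchers; $\mathrm{sstat}_{\mathtt{vsc}}(G)$ is the minimum $k$ such that there is a searcher-stationary winning $\mathtt{vsc}$-strategy using at most $k$ searchers. *)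

theory Defs
  imports Main "HOL-Library.Sublist"
begin

text \<open>A digraph is given by a finite nonempty vertex set V and an edge relation E on V
  without self-loops. Induced subgraphs are identified with their vertex sets.\<close>

definition digraph :: "'a set \<Rightarrow> ('a \<times> 'a) set \<Rightarrow> bool" where
  "digraph V E \<longleftrightarrow> finite V \<and> V \<noteq> {} \<and> E \<subseteq> V \<times> V \<and> (\<forall>v. (v, v) \<notin> E)"

definition Er :: "('a \<times> 'a) set \<Rightarrow> 'a set \<Rightarrow> ('a \<times> 'a) set" where
  "Er E S = E \<inter> (S \<times> S)"

definition reach :: "('a \<times> 'a) set \<Rightarrow> 'a set \<Rightarrow> 'a \<Rightarrow> 'a \<Rightarrow> bool" where
  "reach E S u v \<longleftrightarrow> u \<in> S \<and> v \<in> S \<and> (u, v) \<in> (Er E S)\<^sup>*"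

definition scc_of :: "('a \<times> 'a) set \<Rightarrow> 'a set \<Rightarrow> 'a \<Rightarrow> 'a set" where
  "scc_of E S v = {w. reach E S v w \<and> reach E S w v}"

definition sccs :: "('a \<times> 'a) set \<Rightarrow> 'a set \<Rightarrow> 'a set set" where
  "sccs E S = {scc_of E S v | v. v \<in> S}"

definition strongly_connected :: "('a \<times> 'a) set \<Rightarrow> 'a set \<Rightarrow> bool" where
  "strongly_connected E S \<longleftrightarrow> S \<noteq> {} \<and> (\<forall>u\<in>S. \<forall>v\<in>S. reach E S u v)"

definition acyclic_on :: "('a \<times> 'a) set \<Rightarrow> 'a set \<Rightarrow> bool" where
  "acyclic_on E S \<longleftrightarrow> acyclic (Er E S)"

definition succ_closed :: "('a \<times> 'a) set \<Rightarrow> 'a set \<Rightarrow> 'a set \<Rightarrow> bool" where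
  "succ_closed E S H \<longleftrightarrow> H \<subseteq> S \<and> (\<forall>u v. (u, v) \<in> E \<longrightarrow> u \<in> H \<longrightarrow> v \<in> S \<longrightarrow> v \<in> H)"

definition initial_comp :: "('a \<times> 'a) set \<Rightarrow> 'a set \<Rightarrow> 'a set \<Rightarrow> bool" where
  "initial_comp E H C \<longleftrightarrow> C \<in> sccs E H \<and> \<not> (\<exists>u v. (u, v) \<in> E \<and> u \<in> H - C \<and> v \<in> C)"

definition union_sccs :: "('a \<times> 'a) set \<Rightarrow> 'a set \<Rightarrow> 'a set \<Rightarrow> bool" where
  "union_sccs E S R \<longleftrightarrow> R \<subseteq> S \<and> (\<forall>v\<in>R. scc_of E S v \<subseteq> R)"

text \<open>Recursion with fuel; the fuel card S suffices since every recursive call is on a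
  strictly smaller set, so cr below agrees with the recursive definition.\<close>
primrec cr_aux :: "('a \<times> 'a) set \<Rightarrow> nat \<Rightarrow> 'a set \<Rightarrow> nat" where
  "cr_aux E 0 S = 0"
| "cr_aux E (Suc n) S =
     (if acyclic_on E S then 0
      else if strongly_connected E S then 1 + Min ((\<lambda>v. cr_aux E n (S - {v})) ` S)
      else Max ((\<lambda>C. cr_aux E n C) ` sccs E S))"

definition cr :: "('a \<times> 'a) set \<Rightarrow> 'a set \<Rightarrow> nat" where
  "cr E S = cr_aux E (card S) S"

datatype gvar = GI | GISC | GV | GVSC

type_synonym 'a position = "'a list \<times> 'a set"

definition gen_pos :: "gvar \<Rightarrow> 'a set \<Rightarrow> ('a \<times> 'a) set \<Rightarrow> 'a position \<Rightarrow> bool" where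
  "gen_pos g V E p = (case p of (X, R) \<Rightarrow>
     set X \<subseteq> V \<and> R \<subseteq> V - set X \<and>
     (case g of
        GI \<Rightarrow> succ_closed E (V - set X) R
      | GISC \<Rightarrow> union_sccs E (V - set X) R
      | GV \<Rightarrow> succ_closed E (V - set X) R \<and> (R = {} \<or> (\<exists>!C. initial_comp E R C))
      | GVSC \<Rightarrow> R = {} \<or> R \<in> sccs E (V - set X)))"

definition special_pos :: "gvar \<Rightarrow> 'a set \<Rightarrow> ('a \<times> 'a) set \<Rightarrow> 'a position \<Rightarrow> bool" where
  "special_pos g V E p \<longleftrightarrow> g \<in> {GV, GVSC} \<and> p = ([], V) \<and> \<not> gen_pos g V E ([], V)"

definition is_pos :: "gvar \<Rightarrow> 'a set \<Rightarrow> ('a \<times> 'a) set \<Rightarrow> 'a position \<Rightarrow> bool" where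
  "is_pos g V E p \<longleftrightarrow> gen_pos g V E p \<or> special_pos g V E p"

definition is_succ :: "gvar \<Rightarrow> 'a set \<Rightarrow> ('a \<times> 'a) set \<Rightarrow> 'a position \<Rightarrow> 'a position \<Rightarrow> bool" where
  "is_succ g V E p q =
    (if special_pos g V E p then gen_pos g V E q \<and> fst q = []
     else gen_pos g V E p \<and> gen_pos g V E q \<and>
       (case p of (X, R) \<Rightarrow> case q of (X', R') \<Rightarrow>
          (prefix X X' \<or> prefix X' X) \<and>
          card ((set X - set X') \<union> (set X' - set X)) = 1 \<and>
          (let W = V - (set X \<inter> set X') in
           if g \<in> {GI, GV} then (\<forall>v'\<in>R'. \<exists>v\<in>R. reach E W v v')
           else (\<forall>v'\<in>R'. \<exists>v\<in>R. v' \<in> scc_of E W v))))"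

definition is_strategy :: "gvar \<Rightarrow> 'a set \<Rightarrow> ('a \<times> 'a) set \<Rightarrow> ('a position \<Rightarrow> 'a list) \<Rightarrow> bool" where
  "is_strategy g V E \<sigma> \<longleftrightarrow> (\<forall>p. is_pos g V E p \<longrightarrow> (\<exists>R'. is_succ g V E p (\<sigma> p, R')))"

text \<open>A search is a finite or infinite sequence f of positions: len = None means infinite
  (indices all naturals), len = Some n means positions f 0, ..., f n.\<close>
definition idx :: "nat option \<Rightarrow> nat set" where
  "idx len = (case len of None \<Rightarrow> UNIV | Some n \<Rightarrow> {..n})"

definition complete_consistent_search ::
  "gvar \<Rightarrow> 'a set \<Rightarrow> ('a \<times> 'a) set \<Rightarrow> ('a position \<Rightarrow> 'a list) \<Rightarrow> (nat \<Rightarrow> 'a position) \<Rightarrow> nat option \<Rightarrow> bool" where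
  "complete_consistent_search g V E \<sigma> f len \<longleftrightarrow>
     f 0 = ([], V) \<and>
     (\<forall>i\<in>idx len. is_pos g V E (f i)) \<and>
     (\<forall>i. Suc i \<in> idx len \<longrightarrow> is_succ g V E (f i) (f (Suc i)) \<and> fst (f (Suc i)) = \<sigma> (f i)) \<and>
     (len = None \<or> (\<exists>i\<in>idx len. snd (f i) = {}))"

definition winning_strat :: "gvar \<Rightarrow> 'a set \<Rightarrow> ('a \<times> 'a) set \<Rightarrow> ('a position \<Rightarrow> 'a list) \<Rightarrow> bool" where
  "winning_strat g V E \<sigma> \<longleftrightarrow> (\<forall>f len. complete_consistent_search g V E \<sigma> f len \<longrightarrow>
      (\<exists>i\<in>idx len. snd (f i) = {}))"

definition monotone_strat :: "gvar \<Rightarrow> 'a set \<Rightarrow> ('a \<times> 'a) set \<Rightarrow> ('a position \<Rightarrow> 'a list) \<Rightarrow> bool" where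
  "monotone_strat g V E \<sigma> \<longleftrightarrow> (\<forall>f len. complete_consistent_search g V E \<sigma> f len \<longrightarrow>
      (\<forall>i. Suc i \<in> idx len \<longrightarrow> snd (f (Suc i)) \<subseteq> snd (f i)))"

definition stationary_strat :: "gvar \<Rightarrow> 'a set \<Rightarrow> ('a \<times> 'a) set \<Rightarrow> ('a position \<Rightarrow> 'a list) \<Rightarrow> bool" where
  "stationary_strat g V E \<sigma> \<longleftrightarrow> (\<forall>f len. complete_consistent_search g V E \<sigma> f len \<longrightarrow>
      (\<forall>i. Suc i \<in> idx len \<longrightarrow> snd (f i) \<noteq> {} \<longrightarrow> prefix (fst (f i)) (fst (f (Suc i)))))"

definition uses_at_most :: "gvar \<Rightarrow> 'a set \<Rightarrow> ('a \<times> 'a) set \<Rightarrow> ('a position \<Rightarrow> 'a list) \<Rightarrow> nat \<Rightarrow> bool" where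
  "uses_at_most g V E \<sigma> k \<longleftrightarrow> (\<forall>f len. complete_consistent_search g V E \<sigma> f len \<longrightarrow>
      (\<forall>i\<in>idx len. length (fst (f i)) \<le> k))"

definition lifo :: "gvar \<Rightarrow> 'a set \<Rightarrow> ('a \<times> 'a) set \<Rightarrow> nat" where
  "lifo g V E = (LEAST k. \<exists>\<sigma>. is_strategy g V E \<sigma> \<and> winning_strat g V E \<sigma> \<and> uses_at_most g V E \<sigma> k)"

definition lifo_m :: "gvar \<Rightarrow> 'a set \<Rightarrow> ('a \<times> 'a) set \<Rightarrow> nat" where
  "lifo_m g V E = (LEAST k. \<exists>\<sigma>. is_strategy g V E \<sigma> \<and> winning_strat g V E \<sigma> \<and>
      monotone_strat g V E \<sigma> \<and> uses_at_most g V E \<sigma> k)"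

definition sstat_vsc :: "'a set \<Rightarrow> ('a \<times> 'a) set \<Rightarrow> nat" where
  "sstat_vsc V E = (LEAST k. \<exists>\<sigma>. is_strategy GVSC V E \<sigma> \<and> winning_strat GVSC V E \<sigma> \<and>
      stationary_strat GVSC V E \<sigma> \<and> uses_at_most GVSC V E \<sigma> k)"

end

theory Submission
  imports Defs
begin




lemma Er_mono: "S \<subseteq> T \<Longrightarrow> Er E S \<subseteq> Er E T"
  unfolding Er_def by auto

lemma rt_mono: "(a,b) \<in> (Er E S)\<^sup>* \<Longrightarrow> S \<subseteq> T \<Longrightarrow> (a,b) \<in> (Er E T)\<^sup>*"
  using rtrancl_mono[OF Er_mono] by blast

lemma reach_mono: "reach E S a b \<Longrightarrow> S \<subseteq> T \<Longrightarrow> reach E T a b"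
  unfolding reach_def using rt_mono[of a b E S T] by blast

lemma reach_refl: "a \<in> S \<Longrightarrow> reach E S a a"
  unfolding reach_def by auto

lemma reach_trans: "reach E S a b \<Longrightarrow> reach E S b c \<Longrightarrow> reach E S a c"
  unfolding reach_def by auto

lemma reach_edge: "(a,b) \<in> E \<Longrightarrow> a \<in> S \<Longrightarrow> b \<in> S \<Longrightarrow> reach E S a b"
  unfolding reach_def Er_def by auto

lemma reach_in: "reach E S a b \<Longrightarrow> a \<in> S \<and> b \<in> S"
  unfolding reach_def by auto

lemma scc_of_sub: "scc_of E S v \<subseteq> S"
  unfolding scc_of_def reach_def by auto

lemma scc_of_self: "v \<in> S \<Longrightarrow> v \<in> scc_of E S v"
  unfolding scc_of_def by (auto intro: reach_refl)

lemma scc_of_eq: "w \<in> scc_of E S v \<Longrightarrow> scc_of E S w = scc_of E S v"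
  unfolding scc_of_def using reach_trans[of E S] by blast

lemma scc_of_sym: "w \<in> scc_of E S v \<Longrightarrow> v \<in> scc_of E S w"
  unfolding scc_of_def by auto

lemma scc_of_mono: "S \<subseteq> T \<Longrightarrow> scc_of E S v \<subseteq> scc_of E T v"
proof
  fix x assume "S \<subseteq> T" "x \<in> scc_of E S v"
  then show "x \<in> scc_of E T v" unfolding scc_of_def using reach_mono[of E S _ _ T] by blast
qed

lemma path_in_scc_aux:
  assumes "(a,b) \<in> (Er E S)\<^sup>*" "a \<in> S"
  shows "(b,a) \<in> (Er E S)\<^sup>* \<longrightarrow> (a,b) \<in> (Er E (scc_of E S a))\<^sup>*"
  using assms(1)
proof (induction rule: rtrancl_induct)
  case base
  then show ?case by simp
next
  case (step y z)
  show ?case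
  proof
    assume za: "(z,a) \<in> (Er E S)\<^sup>*"
    have yz: "(y,z) \<in> Er E S" by fact
    then have ya: "(y,a) \<in> (Er E S)\<^sup>*" using za by (meson converse_rtrancl_into_rtrancl)
    have IH: "(a,y) \<in> (Er E (scc_of E S a))\<^sup>*" using step.IH ya by blast
    have yS: "y \<in> S" "z \<in> S" using yz unfolding Er_def by auto
    have "y \<in> scc_of E S a" using step.hyps(1) ya yS assms(2) unfolding scc_of_def reach_def by auto
    moreover have "z \<in> scc_of E S a" using step.hyps(1) yz za yS assms(2) unfolding scc_of_def reach_def
      by (auto intro: rtrancl_into_rtrancl)
    ultimately have "(y,z) \<in> Er E (scc_of E S a)" using yz unfolding Er_def by auto
    then show "(a,z) \<in> (Er E (scc_of E S a))\<^sup>*" using IH by (meson rtrancl_into_rtrancl)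
  qed
qed

lemma scc_internal:
  assumes "a \<in> scc_of E S v" "b \<in> scc_of E S v"
  shows "reach E (scc_of E S v) a b"
proof -
  have e: "scc_of E S a = scc_of E S v" using scc_of_eq[OF assms(1)] .
  have "b \<in> scc_of E S a" using e assms by simp
  then have ab: "(a,b) \<in> (Er E S)\<^sup>*" "(b,a) \<in> (Er E S)\<^sup>*" "a \<in> S"
    unfolding scc_of_def reach_def by auto
  have "(a,b) \<in> (Er E (scc_of E S a))\<^sup>*" using path_in_scc_aux[OF ab(1) ab(3)] ab(2) by blast
  then show ?thesis using e assms unfolding reach_def by simp
qed

lemma scc_sc: "v \<in> S \<Longrightarrow> strongly_connected E (scc_of E S v)"
  unfolding strongly_connected_def using scc_internal[of _ E S v] scc_of_self[of v S E] by blast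

lemma sccs_sc: "D \<in> sccs E S \<Longrightarrow> strongly_connected E D \<and> D \<subseteq> S"
proof -
  assume "D \<in> sccs E S"
  then obtain v where "v \<in> S" "D = scc_of E S v" unfolding sccs_def by blast
  then show ?thesis using scc_sc[of v S E] scc_of_sub[of E S v] by simp
qed

lemma sccs_eq: "D \<in> sccs E S \<Longrightarrow> d \<in> D \<Longrightarrow> scc_of E S d = D"
proof -
  assume "D \<in> sccs E S" "d \<in> D"
  then obtain v where "D = scc_of E S v" unfolding sccs_def by blast
  then show ?thesis using scc_of_eq[of d E S v] \<open>d \<in> D\<close> by simp
qed

lemma sccs_I: "v \<in> S \<Longrightarrow> scc_of E S v \<in> sccs E S"
  unfolding sccs_def by blast

lemma sc_sub_scc:
  assumes "strongly_connected E C" "C \<subseteq> S" "c \<in> C"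
  shows "C \<subseteq> scc_of E S c"
proof
  fix x assume "x \<in> C"
  then show "x \<in> scc_of E S c" using assms unfolding strongly_connected_def scc_of_def
    using reach_mono[of E C _ _ S] by blast
qed

lemma sc_eq_scc:
  assumes "strongly_connected E C" "c \<in> C"
  shows "scc_of E C c = C"
  using sc_sub_scc[OF assms(1) order_refl assms(2)] scc_of_sub[of E C c] by blast

lemma succ_closed_path:
  assumes "(a,b) \<in> (Er E W)\<^sup>*" "a \<in> R" "\<And>u w. (u,w) \<in> E \<Longrightarrow> u \<in> R \<Longrightarrow> w \<in> W \<Longrightarrow> w \<in> R"
  shows "b \<in> R \<and> (a,b) \<in> (Er E R)\<^sup>*"
  using assms(1)
proof (induction rule: rtrancl_induct)
  case base then show ?case using assms(2) by simp
next
  case (step y z)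
  then have "z \<in> R" using assms(3) unfolding Er_def by auto
  then have "(y,z) \<in> Er E R" using step unfolding Er_def by auto
  then show ?case using step \<open>z \<in> R\<close> by (meson rtrancl_into_rtrancl)
qed

lemma sccs_finite: "finite S \<Longrightarrow> finite (sccs E S)"
proof -
  assume "finite S"
  have "sccs E S \<subseteq> Pow S" using sccs_sc[of _ E S] by blast
  then show ?thesis using \<open>finite S\<close> finite_subset by blast
qed

lemma acyclic_on_sub: "acyclic_on E S \<Longrightarrow> T \<subseteq> S \<Longrightarrow> acyclic_on E T"
  unfolding acyclic_on_def using acyclic_subset[of "Er E S" "Er E T"] Er_mono[of T S E] by blast

lemma sc_two_cyclic:
  assumes "strongly_connected E S" "u \<in> S" "v \<in> S" "u \<noteq> v"
  shows "\<not> acyclic_on E S"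
proof -
  have 1: "(u,v) \<in> (Er E S)\<^sup>*" "(v,u) \<in> (Er E S)\<^sup>*" using assms unfolding strongly_connected_def reach_def by auto
  have "(u,v) \<in> (Er E S)\<^sup>+" using 1(1) assms(4) by (simp add: rtrancl_eq_or_trancl)
  moreover have "(v,u) \<in> (Er E S)\<^sup>+" using 1(2) assms(4) by (simp add: rtrancl_eq_or_trancl)
  ultimately have "(u,u) \<in> (Er E S)\<^sup>+" by (rule trancl_trans)
  then show ?thesis unfolding acyclic_on_def acyclic_def by blast
qed

lemma noloop_acyclic:
  assumes "\<forall>v. (v,v) \<notin> E" "finite S" "card S \<le> 1"
  shows "acyclic_on E S"
proof -
  have "Er E S = {}"
  proof (rule ccontr)
    assume "Er E S \<noteq> {}"
    then obtain a b where ab: "(a,b) \<in> E" "a \<in> S" "b \<in> S" unfolding Er_def by auto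
    then have "a \<noteq> b" using assms(1) by auto
    then have "card {a,b} = 2" by simp
    moreover have "card {a,b} \<le> card S" using ab assms(2) by (intro card_mono) auto
    ultimately show False using assms by simp
  qed
  then show ?thesis unfolding acyclic_on_def acyclic_def by simp
qed





lemma acyclic_empty: "acyclic_on E {}"
  unfolding acyclic_on_def acyclic_def Er_def by simp

lemma sccs_psubset:
  assumes "C \<in> sccs E S" "\<not> strongly_connected E S" "finite S"
  shows "card C < card S"
proof -
  have "strongly_connected E C" "C \<subseteq> S" using sccs_sc[OF assms(1)] by auto
  then have "C \<noteq> S" using assms(2) by auto
  then show ?thesis using \<open>C \<subseteq> S\<close> assms(3) by (meson psubsetI psubset_card_mono)
qed

lemma cr_aux_fuel:
  "finite S \<Longrightarrow> card S \<le> m \<Longrightarrow> card S \<le> m' \<Longrightarrow> cr_aux E m S = cr_aux E m' S"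
proof (induction m arbitrary: m' S)
  case 0
  then have "S = {}" by simp
  then show ?case by (cases m') (simp_all add: acyclic_empty)
next
  case (Suc k)
  show ?case
  proof (cases m')
    case 0
    then have "S = {}" using Suc by simp
    then show ?thesis using 0 by (simp add: acyclic_empty)
  next
    case (Suc k')
    have A: "\<And>v. v \<in> S \<Longrightarrow> cr_aux E k (S - {v}) = cr_aux E k' (S - {v})"
    proof -
      fix v assume "v \<in> S"
      then have "card (S - {v}) = card S - 1" using Suc.prems(1) by simp
      then show "cr_aux E k (S - {v}) = cr_aux E k' (S - {v})"
        using Suc.IH[of "S - {v}" k'] Suc.prems \<open>m' = Suc k'\<close> by simp
    qed
    have B: "\<not> strongly_connected E S \<Longrightarrow> C \<in> sccs E S \<Longrightarrow> cr_aux E k C = cr_aux E k' C" for C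
    proof -
      assume "\<not> strongly_connected E S" "C \<in> sccs E S"
      then have "card C < card S" using sccs_psubset Suc.prems(1) by blast
      moreover have "finite C" using sccs_sc[OF \<open>C \<in> sccs E S\<close>] Suc.prems(1) finite_subset by blast
      ultimately show ?thesis using Suc.IH[of C k'] Suc.prems \<open>m' = Suc k'\<close> by simp
    qed
    have "(\<lambda>v. cr_aux E k (S - {v})) ` S = (\<lambda>v. cr_aux E k' (S - {v})) ` S"
      using A by (rule image_cong[OF refl])
    moreover have "\<not> strongly_connected E S \<Longrightarrow> (\<lambda>C. cr_aux E k C) ` sccs E S = (\<lambda>C. cr_aux E k' C) ` sccs E S"
      using B by (intro image_cong) auto
    ultimately show ?thesis using Suc by (simp only: cr_aux.simps) simp
  qed
qed

lemma cr_unfold: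
  assumes "finite S"
  shows "cr E S = (if acyclic_on E S then 0 else if strongly_connected E S
      then 1 + Min ((\<lambda>v. cr E (S - {v})) ` S) else Max ((\<lambda>C. cr E C) ` sccs E S))"
proof (cases "S = {}")
  case True
  then show ?thesis unfolding cr_def by (simp add: acyclic_empty)
next
  case False
  then obtain m where m: "card S = Suc m" using assms by (metis card_0_eq not0_implies_Suc)
  have A: "v \<in> S \<Longrightarrow> cr_aux E m (S - {v}) = cr E (S - {v})" for v
    unfolding cr_def using m assms by simp
  have B: "\<not> strongly_connected E S \<Longrightarrow> C \<in> sccs E S \<Longrightarrow> cr_aux E m C = cr E C" for C
  proof -
    assume "\<not> strongly_connected E S" "C \<in> sccs E S"
    then have "card C < card S" using sccs_psubset assms by blast
    moreover have "finite C" using sccs_sc[OF \<open>C \<in> sccs E S\<close>] assms finite_subset by blast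
    ultimately show ?thesis unfolding cr_def using cr_aux_fuel[of C m "card C" E] m by simp
  qed
  have "(\<lambda>v. cr_aux E m (S - {v})) ` S = (\<lambda>v. cr E (S - {v})) ` S"
    using A by (rule image_cong[OF refl])
  moreover have "\<not> strongly_connected E S \<Longrightarrow> (\<lambda>C. cr_aux E m C) ` sccs E S = (\<lambda>C. cr E C) ` sccs E S"
    using B by (intro image_cong) auto
  ultimately show ?thesis unfolding cr_def[of E S] using m by (simp only: cr_aux.simps) simp
qed

lemma cr_acyclic: "finite S \<Longrightarrow> acyclic_on E S \<Longrightarrow> cr E S = 0"
  using cr_unfold[of S E] by simp

lemma cr_sc: "finite S \<Longrightarrow> \<not> acyclic_on E S \<Longrightarrow> strongly_connected E S \<Longrightarrow>
   cr E S = 1 + Min ((\<lambda>v. cr E (S - {v})) ` S)"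
  using cr_unfold[of S E] by simp

lemma cr_nsc: "finite S \<Longrightarrow> \<not> acyclic_on E S \<Longrightarrow> \<not> strongly_connected E S \<Longrightarrow>
   cr E S = Max ((\<lambda>C. cr E C) ` sccs E S)"
  using cr_unfold[of S E] by simp

lemma sccs_nonempty: "S \<noteq> {} \<Longrightarrow> sccs E S \<noteq> {}"
proof -
  assume "S \<noteq> {}"
  then obtain v where "v \<in> S" by blast
  then show ?thesis using sccs_I[of v S E] by blast
qed

lemma cr_max_scc:
  assumes "finite S" "S \<noteq> {}"
  shows "\<exists>D \<in> sccs E S. cr E S \<le> cr E D"
proof -
  obtain v where v: "v \<in> S" using assms by blast
  show ?thesis
  proof (cases "acyclic_on E S")
    case True
    have "scc_of E S v \<in> sccs E S" using sccs_I[OF v] .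
    moreover have "cr E S = 0" using cr_acyclic[OF assms(1) True] .
    ultimately show ?thesis by (intro bexI[of _ "scc_of E S v"]) simp_all
  next
    case F: False
    show ?thesis
    proof (cases "strongly_connected E S")
      case True
      have "scc_of E S v = S" by (rule sc_eq_scc[OF True v])
      then have "S \<in> sccs E S" using sccs_I[OF v, of E] by simp
      then show ?thesis by (intro bexI[of _ S]) simp_all
    next
      case False
      have fin: "finite ((\<lambda>C. cr E C) ` sccs E S)" using sccs_finite[OF assms(1)] by simp
      have ne: "(\<lambda>C. cr E C) ` sccs E S \<noteq> {}" using sccs_nonempty[OF assms(2)] by simp
      have "cr E S \<in> (\<lambda>C. cr E C) ` sccs E S" using cr_nsc[OF assms(1) F False] Max_in[OF fin ne] by simp
      then obtain D where "D \<in> sccs E S" "cr E S = cr E D" by blast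
      then show ?thesis by (intro bexI[of _ D]) simp_all
    qed
  qed
qed

lemma cr_mono_aux:
  "finite S \<Longrightarrow> T \<subseteq> S \<Longrightarrow> cr E T \<le> cr E S"
proof (induction "card S" arbitrary: S T rule: less_induct)
  case less
  have finS: "finite S" by fact
  have Q: "cr E T' \<le> cr E S" if T': "T' \<subseteq> S" "strongly_connected E T'" "\<not> acyclic_on E T'" for T'
  proof -
    have finT: "finite T'" using T'(1) finS finite_subset by blast
    have cyS: "\<not> acyclic_on E S" using T'(1,3) acyclic_on_sub by blast
    show ?thesis
    proof (cases "strongly_connected E S")
      case True
      have SnE: "S \<noteq> {}" using True unfolding strongly_connected_def by simp
      have fin: "finite ((\<lambda>v. cr E (S - {v})) ` S)" using finS by simp
      have ne: "(\<lambda>v. cr E (S - {v})) ` S \<noteq> {}" using SnE by simp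
      obtain w where w: "w \<in> S" "Min ((\<lambda>v. cr E (S - {v})) ` S) = cr E (S - {w})"
        using Min_in[OF fin ne] by auto
      have crS: "cr E S = 1 + cr E (S - {w})" using cr_sc[OF finS cyS True] w by simp
      have lt: "card (S - {w}) < card S" using card_Diff1_less[OF finS w(1)] .
      show ?thesis
      proof (cases "w \<in> T'")
        case False
        then have "T' \<subseteq> S - {w}" using T'(1) by auto
        then have "cr E T' \<le> cr E (S - {w})" using less.hyps[OF lt, of T'] finS by simp
        then show ?thesis using crS by simp
      next
        case True
        have fin2: "finite ((\<lambda>v. cr E (T' - {v})) ` T')" using finT by simp
        have "Min ((\<lambda>v. cr E (T' - {v})) ` T') \<le> cr E (T' - {w})" using Min_le[OF fin2] True by simp
        then have "cr E T' \<le> 1 + cr E (T' - {w})" using cr_sc[OF finT T'(3) T'(2)] by simp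
        moreover have "cr E (T' - {w}) \<le> cr E (S - {w})" using less.hyps[OF lt, of "T' - {w}"] finS T'(1) by auto
        ultimately show ?thesis using crS by simp
      qed
    next
      case False
      obtain t where t: "t \<in> T'" using T'(2) unfolding strongly_connected_def by blast
      have tS: "t \<in> S" using t T'(1) by blast
      define D where "D = scc_of E S t"
      have DS: "D \<in> sccs E S" using sccs_I[OF tS] D_def by simp
      have "T' \<subseteq> D" using sc_sub_scc[OF T'(2) T'(1) t] D_def by simp
      moreover have "card D < card S" using sccs_psubset[OF DS False finS] .
      moreover have "finite D" using sccs_sc[OF DS] finS finite_subset by blast
      ultimately have "cr E T' \<le> cr E D" using less.hyps[of D T'] by blast
      also have "cr E D \<le> Max ((\<lambda>C. cr E C) ` sccs E S)"
        using Max_ge DS sccs_finite[OF finS] by simp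
      also have "\<dots> = cr E S" using cr_nsc[OF finS cyS False] by simp
      finally show ?thesis .
    qed
  qed
  show ?case
  proof (cases "acyclic_on E T")
    case True
    have "finite T" using less.prems finite_subset by blast
    then show ?thesis using cr_acyclic[of T E] True by simp
  next
    case cyT: False
    have finT: "finite T" using less.prems finite_subset by blast
    show ?thesis
    proof (cases "strongly_connected E T")
      case True
      then show ?thesis using Q[of T] less.prems cyT by blast
    next
      case nsc: False
      have TnE: "T \<noteq> {}" using cyT acyclic_empty by blast
      have fin: "finite ((\<lambda>C. cr E C) ` sccs E T)" using sccs_finite[OF finT] by simp
      have ne: "(\<lambda>C. cr E C) ` sccs E T \<noteq> {}" using sccs_nonempty[OF TnE] by simp
      obtain D where D: "D \<in> sccs E T" "cr E T = cr E D"
        using cr_nsc[OF finT cyT nsc] Max_in[OF fin ne] by auto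
      have DT: "strongly_connected E D" "D \<subseteq> T" using sccs_sc[OF D(1)] by auto
      show ?thesis
      proof (cases "acyclic_on E D")
        case True
        have "finite D" using DT finT finite_subset by blast
        then have "cr E D = 0" using cr_acyclic[of D E] True by blast
        then show ?thesis using D by simp
      next
        case False
        then show ?thesis using Q[of D] DT less.prems D by auto
      qed
    qed
  qed
qed





definition relg :: "gvar \<Rightarrow> ('a \<times> 'a) set \<Rightarrow> 'a set \<Rightarrow> 'a \<Rightarrow> 'a \<Rightarrow> bool" where
  "relg g E W v v' = (if g \<in> {GI, GV} then reach E W v v' else v' \<in> scc_of E W v)"

lemma gen_not_special: "gen_pos g V E p \<Longrightarrow> \<not> special_pos g V E p"
  unfolding special_pos_def by auto

lemma is_succ_gen:
  assumes "gen_pos g V E (X,R)"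
  shows "is_succ g V E (X,R) (X',R') \<longleftrightarrow> gen_pos g V E (X',R') \<and> (prefix X X' \<or> prefix X' X) \<and>
     card ((set X - set X') \<union> (set X' - set X)) = 1 \<and>
     (\<forall>v'\<in>R'. \<exists>v\<in>R. relg g E (V - (set X \<inter> set X')) v v')"
  using gen_not_special[OF assms] assms unfolding is_succ_def relg_def Let_def by auto

lemma gen_pos_basic: "gen_pos g V E (X,R) \<Longrightarrow> set X \<subseteq> V \<and> R \<subseteq> V - set X"
  unfolding gen_pos_def by auto

lemma gen_pos_empty: "set X \<subseteq> V \<Longrightarrow> gen_pos g V E (X, {})"
  unfolding gen_pos_def succ_closed_def union_sccs_def by (cases g) auto

lemma gen_pos_closed:
  assumes "gen_pos g V E (X,R)" "w \<in> R"
  shows "scc_of E (V - set X) w \<subseteq> R"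
proof (cases g)
  case GI
  then have sc: "succ_closed E (V - set X) R" using assms unfolding gen_pos_def by auto
  show ?thesis
  proof
    fix y assume "y \<in> scc_of E (V - set X) w"
    then have "(w,y) \<in> (Er E (V - set X))\<^sup>*" unfolding scc_of_def reach_def by auto
    then show "y \<in> R" using succ_closed_path[of w y E "V - set X" R] sc assms(2) unfolding succ_closed_def by blast
  qed
next
  case GV
  then have sc: "succ_closed E (V - set X) R" using assms unfolding gen_pos_def by auto
  show ?thesis
  proof
    fix y assume "y \<in> scc_of E (V - set X) w"
    then have "(w,y) \<in> (Er E (V - set X))\<^sup>*" unfolding scc_of_def reach_def by auto
    then show "y \<in> R" using succ_closed_path[of w y E "V - set X" R] sc assms(2) unfolding succ_closed_def by blast
  qed
next
  case GISC
  then show ?thesis using assms unfolding gen_pos_def union_sccs_def by auto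
next
  case GVSC
  then have "R \<in> sccs E (V - set X)" using assms unfolding gen_pos_def by auto
  then show ?thesis using sccs_eq[of R E "V - set X" w] assms(2) by simp
qed

lemma gen_pos_reach_closed:
  assumes "gen_pos g V E (X,R)" "g \<in> {GI, GV}" "w \<in> R" "reach E (V - set X) w y"
  shows "y \<in> R"
proof -
  have sc: "succ_closed E (V - set X) R" using assms(1,2) unfolding gen_pos_def by auto
  have "(w,y) \<in> (Er E (V - set X))\<^sup>*" using assms(4) unfolding reach_def by auto
  then show "y \<in> R" using succ_closed_path[of w y E "V - set X" R] sc assms(3) unfolding succ_closed_def by blast
qed

lemma relg_closed:
  assumes "gen_pos g V E (X,R)" "v \<in> R" "relg g E (V - set X) v v'"
  shows "v' \<in> R"
proof (cases "g \<in> {GI, GV}")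
  case True
  then show ?thesis using assms gen_pos_reach_closed[OF assms(1) True assms(2)] unfolding relg_def by auto
next
  case False
  then show ?thesis using assms gen_pos_closed[OF assms(1,2)] unfolding relg_def by auto
qed

lemma ex_prefix_drop:
  "X \<noteq> [] \<Longrightarrow> \<exists>X'. prefix X' X \<and> card ((set X - set X') \<union> (set X' - set X)) = 1"
proof (induction X rule: rev_induct)
  case Nil then show ?case by simp
next
  case (snoc a Y)
  show ?case
  proof (cases "a \<in> set Y")
    case False
    have "(set (Y@[a]) - set Y) \<union> (set Y - set (Y@[a])) = {a}" using False by auto
    then show ?thesis by (intro exI[of _ Y]) simp
  next
    case True
    then have "Y \<noteq> []" by auto
    then obtain Y' where "prefix Y' Y" "card ((set Y - set Y') \<union> (set Y' - set Y)) = 1" using snoc.IH by blast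
    moreover have "set (Y@[a]) = set Y" using True by auto
    ultimately show ?thesis by (intro exI[of _ Y']) auto
  qed
qed

lemma set_butlast_split:
  assumes "X \<noteq> []" shows "set X = insert (last X) (set (butlast X))"
proof -
  have X: "X = butlast X @ [last X]" using assms by simp
  show ?thesis by (subst X) auto
qed

lemma last_notin_butlast:
  assumes "distinct X" "X \<noteq> []" shows "last X \<notin> set (butlast X)"
proof -
  have X: "X = butlast X @ [last X]" using assms(2) by simp
  have "distinct (butlast X @ [last X])" using assms(1) X by simp
  then show ?thesis by simp
qed

lemma butlast_symdiff:
  assumes "distinct X" "X \<noteq> []"
  shows "(set X - set (butlast X)) \<union> (set (butlast X) - set X) = {last X}"
  using set_butlast_split[OF assms(2)] last_notin_butlast[OF assms] by auto

lemma exists_succ: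
  assumes "is_pos g V E p" "V \<noteq> {}"
  shows "\<exists>X' R'. is_succ g V E p (X', R')"
proof (cases "special_pos g V E p")
  case True
  have "gen_pos g V E ([], {})" using gen_pos_empty[of "[]" V g E] by simp
  then show ?thesis using True unfolding is_succ_def by auto
next
  case False
  obtain X R where p: "p = (X,R)" by fastforce
  have gp: "gen_pos g V E (X,R)" using assms(1) False p unfolding is_pos_def by auto
  have XV: "set X \<subseteq> V" using gen_pos_basic[OF gp] by simp
  show ?thesis
  proof (cases "X = []")
    case True
    obtain v where v: "v \<in> V" using assms(2) by blast
    have "is_succ g V E (X,R) ([v], {})"
      unfolding is_succ_gen[OF gp] using gen_pos_empty[of "[v]" V g E] v True by simp
    then show ?thesis using p by blast
  next
    case False
    obtain X' where X': "prefix X' X" "card ((set X - set X') \<union> (set X' - set X)) = 1"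
      using ex_prefix_drop[OF False] by blast
    obtain zs where "X = X' @ zs" using X'(1) prefixE by blast
    then have "set X' \<subseteq> V" using XV by auto
    then have "gen_pos g V E (X', {})" using gen_pos_empty[of X' V g E] by simp
    then have "is_succ g V E (X,R) (X', {})"
      unfolding is_succ_gen[OF gp] using X' by blast
    then show ?thesis using p by blast
  qed
qed


lemma initial_scc_exists:
  assumes "finite U" "U \<noteq> {}" "U \<subseteq> W" "\<forall>w\<in>U. scc_of E W w \<subseteq> U"
  shows "\<exists>C \<in> sccs E W. C \<subseteq> U \<and> (\<forall>u w. (u,w) \<in> E \<longrightarrow> u \<in> U - C \<longrightarrow> w \<notin> C)"
proof -
  define anc where "anc w = {u \<in> U. reach E W u w}" for w
  have financ: "finite (anc w)" for w unfolding anc_def using assms(1) by simp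
  define m where "m = Min ((\<lambda>w. card (anc w)) ` U)"
  have fin: "finite ((\<lambda>w. card (anc w)) ` U)" using assms(1) by simp
  have ne: "(\<lambda>w. card (anc w)) ` U \<noteq> {}" using assms(2) by simp
  obtain w0 where w0: "w0 \<in> U" "card (anc w0) = m" using Min_in[OF fin ne] m_def by auto
  have mle: "\<And>w. w \<in> U \<Longrightarrow> m \<le> card (anc w)" using Min_le[OF fin] m_def by simp
  define C where "C = scc_of E W w0"
  have w0W: "w0 \<in> W" using w0(1) assms(3) by blast
  have CS: "C \<in> sccs E W" using sccs_I[OF w0W] C_def by simp
  have CU: "C \<subseteq> U" using assms(4) w0(1) C_def by blast
  have "\<forall>u w. (u,w) \<in> E \<longrightarrow> u \<in> U - C \<longrightarrow> w \<notin> C"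
  proof (intro allI impI notI)
    fix u x assume ux: "(u,x) \<in> E" "u \<in> U - C" "x \<in> C"
    have uW: "u \<in> W" using ux(2) assms(3) by blast
    have xW: "x \<in> W" using ux(3) scc_of_sub[of E W w0] C_def by blast
    have r1: "reach E W u x" using reach_edge[OF ux(1) uW xW] .
    have r2: "reach E W x w0" using ux(3) C_def unfolding scc_of_def by simp
    have uw0: "reach E W u w0" using reach_trans[OF r1 r2] .
    have sub: "anc u \<subseteq> anc w0" unfolding anc_def using reach_trans[of E W _ u w0] uw0 by blast
    have "w0 \<in> anc w0" unfolding anc_def using w0(1) reach_refl[OF w0W] by simp
    moreover have "w0 \<notin> anc u"
    proof
      assume "w0 \<in> anc u"
      then have "reach E W w0 u" unfolding anc_def by simp
      then have "u \<in> C" using uw0 C_def unfolding scc_of_def by simp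
      then show False using ux(2) by simp
    qed
    ultimately have "anc u \<subset> anc w0" using sub by blast
    then have "card (anc u) < card (anc w0)" using financ psubset_card_mono by blast
    then show False using mle[of u] ux(2) w0(2) by simp
  qed
  then show ?thesis using CS CU by blast
qed

definition Zp :: "'a set \<Rightarrow> ('a \<times> 'a) set \<Rightarrow> 'a list \<Rightarrow> 'a set" where
  "Zp V E X = (if X = [] then V else scc_of E (V - set (butlast X)) (last X))"

definition goodstep :: "'a set \<Rightarrow> ('a \<times> 'a) set \<Rightarrow> 'a list \<Rightarrow> 'a \<Rightarrow> bool" where
  "goodstep V E Y x = (x \<in> V - set Y \<and> scc_of E (V - set Y) x \<subseteq> Zp V E Y \<and>
     (\<forall>u \<in> scc_of E (V - set Y) x. cr E (scc_of E (V - set Y) x - {x}) \<le> cr E (scc_of E (V - set Y) x - {u})))"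

definition good :: "'a set \<Rightarrow> ('a \<times> 'a) set \<Rightarrow> 'a list \<Rightarrow> bool" where
  "good V E X = (\<forall>Y x. prefix (Y@[x]) X \<longrightarrow> goodstep V E Y x)"

definition Pedge :: "'a set \<Rightarrow> ('a \<times> 'a) set \<Rightarrow> 'a list \<Rightarrow> 'a set \<Rightarrow> bool" where
  "Pedge V E X R = (\<forall>Y x. prefix (Y@[x]) X \<longrightarrow> (\<forall>u w. (u,w) \<in> E \<longrightarrow> u \<in> R \<longrightarrow>
      w \<in> scc_of E (V - set Y) x \<longrightarrow> u \<in> scc_of E (V - set Y) x))"

lemma Zp_snoc: "Zp V E (Y@[x]) = scc_of E (V - set Y) x"
  unfolding Zp_def by simp

lemma good_prefix: "good V E X \<Longrightarrow> prefix X' X \<Longrightarrow> good V E X'"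
  unfolding good_def using prefix_order.trans by blast

lemma Pedge_prefix: "Pedge V E X R \<Longrightarrow> prefix X' X \<Longrightarrow> R' \<subseteq> R \<Longrightarrow> Pedge V E X' R'"
  unfolding Pedge_def using prefix_order.trans by blast

lemma good_Nil: "good V E []" unfolding good_def by simp
lemma Pedge_Nil: "Pedge V E [] R" unfolding Pedge_def by simp

lemma good_bound:
  assumes "finite V"
  shows "good V E X \<Longrightarrow> X \<noteq> [] \<Longrightarrow> cr E (Zp V E X) + length X \<le> 1 + cr E V"
proof (induction X rule: rev_induct)
  case Nil then show ?case by simp
next
  case (snoc x Y)
  have gs: "goodstep V E Y x" using snoc.prems(1) unfolding good_def by simp
  define S where "S = scc_of E (V - set Y) x"
  have ZS: "Zp V E (Y@[x]) = S" using Zp_snoc S_def by simp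
  show ?case
  proof (cases "Y = []")
    case True
    have "S \<subseteq> V" using scc_of_sub[of E "V - set Y" x] S_def by blast
    then have "cr E S \<le> cr E V" using cr_mono_aux[OF assms] by blast
    then show ?thesis using ZS True by simp
  next
    case False
    have gY: "good V E Y" using good_prefix[OF snoc.prems(1)] by simp
    have IH: "cr E (Zp V E Y) + length Y \<le> 1 + cr E V" using snoc.IH[OF gY False] .
    define Z where "Z = Zp V E Y"
    define l where "l = last Y"
    have Ysplit: "Y = butlast Y @ [l]" using False l_def by simp
    have gl: "goodstep V E (butlast Y) l" using gY Ysplit unfolding good_def
      by (metis prefix_order.refl)
    have Zdef: "Z = scc_of E (V - set (butlast Y)) l" using Z_def Zp_def[of V E Y] False l_def by simp
    have lW: "l \<in> V - set (butlast Y)" using gl unfolding goodstep_def by simp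
    have lZ: "l \<in> Z" using scc_of_self[OF lW] Zdef by simp
    have minl: "\<forall>u\<in>Z. cr E (Z - {l}) \<le> cr E (Z - {u})" using gl Zdef unfolding goodstep_def by simp
    have SZ: "S \<subseteq> Z" using gs S_def Z_def unfolding goodstep_def by simp
    have SnY: "S \<subseteq> V - set Y" using scc_of_sub[of E "V - set Y" x] S_def by simp
    have lY: "l \<in> set Y" using False l_def by simp
    have SZl: "S \<subseteq> Z - {l}" using SZ SnY lY by blast
    have xS: "x \<in> S" using gs S_def scc_of_self[of x "V - set Y" E] unfolding goodstep_def by simp
    have xl: "x \<noteq> l" using xS SnY lY by blast
    have scZ: "strongly_connected E Z" using scc_sc[OF lW] Zdef by simp
    have finZ: "finite Z" using Zdef scc_of_sub[of E "V - set (butlast Y)" l] assms finite_subset by blast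
    have xZ: "x \<in> Z" using xS SZ by blast
    have cyZ: "\<not> acyclic_on E Z" using sc_two_cyclic[OF scZ lZ xZ] xl by blast
    have finI: "finite ((\<lambda>v. cr E (Z - {v})) ` Z)" using finZ by simp
    have "Min ((\<lambda>v. cr E (Z - {v})) ` Z) = cr E (Z - {l})"
      using Min_eqI[OF finI] minl lZ by auto
    then have crZ: "cr E Z = 1 + cr E (Z - {l})" using cr_sc[OF finZ cyZ scZ] by simp
    have "cr E S \<le> cr E (Z - {l})" using cr_mono_aux[of "Z - {l}" S E] finZ SZl by simp
    then show ?thesis using IH crZ ZS Z_def by simp
  qed
qed


definition pickC :: "'a set \<Rightarrow> ('a \<times> 'a) set \<Rightarrow> 'a list \<Rightarrow> 'a set \<Rightarrow> 'a set" where
  "pickC V E X R = (SOME C. C \<in> sccs E (V - set X) \<and> C \<subseteq> R \<inter> Zp V E X \<and>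
      (\<forall>u w. (u,w) \<in> E \<longrightarrow> u \<in> R \<inter> Zp V E X - C \<longrightarrow> w \<notin> C))"

definition pickv :: "'a set \<Rightarrow> ('a \<times> 'a) set \<Rightarrow> 'a list \<Rightarrow> 'a set \<Rightarrow> 'a" where
  "pickv V E X R = (SOME v. v \<in> pickC V E X R \<and>
      (\<forall>u \<in> pickC V E X R. cr E (pickC V E X R - {v}) \<le> cr E (pickC V E X R - {u})))"

definition rule :: "gvar \<Rightarrow> 'a set \<Rightarrow> ('a \<times> 'a) set \<Rightarrow> 'a position \<Rightarrow> 'a list" where
  "rule g V E p = (case p of (X,R) \<Rightarrow>
     if special_pos g V E p then []
     else if R = {} then (if X = [] then [SOME v. v \<in> V] else butlast X)
     else if X \<noteq> [] \<and> R \<inter> Zp V E X = {} then butlast X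
     else X @ [pickv V E X R])"

definition strat :: "gvar \<Rightarrow> 'a set \<Rightarrow> ('a \<times> 'a) set \<Rightarrow> 'a position \<Rightarrow> 'a list" where
  "strat g V E p = (if \<exists>R'. is_succ g V E p (rule g V E p, R') then rule g V E p
     else SOME X'. \<exists>R'. is_succ g V E p (X', R'))"

definition Inv :: "gvar \<Rightarrow> 'a set \<Rightarrow> ('a \<times> 'a) set \<Rightarrow> 'a list \<Rightarrow> 'a set \<Rightarrow> bool" where
  "Inv g V E X R = (distinct X \<and> length X \<le> 1 + cr E V \<and>
     (R \<noteq> {} \<longrightarrow> good V E X \<and> Pedge V E X R \<and> (g = GVSC \<longrightarrow> R \<subseteq> Zp V E X)))"

lemma strat_is_strategy:
  assumes "V \<noteq> {}"
  shows "is_strategy g V E (strat g V E)"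
  unfolding is_strategy_def
proof (intro allI impI)
  fix p assume "is_pos g V E p"
  then obtain X' R' where "is_succ g V E p (X', R')" using exists_succ[OF _ assms] by blast
  then have ex: "\<exists>X' R'. is_succ g V E p (X', R')" by blast
  show "\<exists>R'. is_succ g V E p (strat g V E p, R')"
  proof (cases "\<exists>R'. is_succ g V E p (rule g V E p, R')")
    case True then show ?thesis unfolding strat_def by simp
  next
    case False
    have "\<exists>R'. is_succ g V E p (SOME X'. \<exists>R'. is_succ g V E p (X', R'), R')"
      by (rule someI_ex[OF ex])
    then show ?thesis using False unfolding strat_def by simp
  qed
qed

lemma rule_gen:
  assumes "gen_pos g V E (X,R)"
  shows "rule g V E (X,R) = (if R = {} then (if X = [] then [SOME v. v \<in> V] else butlast X)
     else if X \<noteq> [] \<and> R \<inter> Zp V E X = {} then butlast X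
     else X @ [pickv V E X R])"
  unfolding rule_def using gen_not_special[OF assms] by simp

lemma zone_closed:
  assumes "X \<noteq> []" "w \<in> Zp V E X"
  shows "scc_of E (V - set X) w \<subseteq> Zp V E X"
proof -
  have Z: "Zp V E X = scc_of E (V - set (butlast X)) (last X)" using assms(1) Zp_def[of V E X] by simp
  have "set (butlast X) \<subseteq> set X" using set_butlast_split[OF assms(1)] by auto
  then have "scc_of E (V - set X) w \<subseteq> scc_of E (V - set (butlast X)) w"
    using scc_of_mono[of "V - set X" "V - set (butlast X)" E w] by blast
  also have "\<dots> = Zp V E X" using scc_of_eq[of w E "V - set (butlast X)" "last X"] assms(2) Z by simp
  finally show ?thesis .
qed

lemma pick_props:
  assumes dg: "digraph V E" and gp: "gen_pos g V E (X,R)" and RnE: "R \<noteq> {}"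
    and nl: "\<not> (X \<noteq> [] \<and> R \<inter> Zp V E X = {})"
  shows "pickC V E X R \<in> sccs E (V - set X) \<and> pickC V E X R \<subseteq> R \<inter> Zp V E X \<and>
      (\<forall>u w. (u,w) \<in> E \<longrightarrow> u \<in> R \<inter> Zp V E X - pickC V E X R \<longrightarrow> w \<notin> pickC V E X R) \<and>
      pickv V E X R \<in> pickC V E X R \<and>
      (\<forall>u \<in> pickC V E X R. cr E (pickC V E X R - {pickv V E X R}) \<le> cr E (pickC V E X R - {u}))"
proof -
  have finV: "finite V" using dg unfolding digraph_def by simp
  have RV: "R \<subseteq> V - set X" using gen_pos_basic[OF gp] by simp
  define U where "U = R \<inter> Zp V E X"
  have Une: "U \<noteq> {}"
  proof (cases "X = []")
    case True then show ?thesis using RnE RV U_def Zp_def[of V E X] by auto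
  next
    case False then show ?thesis using nl U_def by simp
  qed
  have "U \<subseteq> V" using RV U_def by blast
  then have finU: "finite U" using finV by (rule finite_subset)
  have UW: "U \<subseteq> V - set X" using RV U_def by blast
  have cl: "\<forall>w\<in>U. scc_of E (V - set X) w \<subseteq> U"
  proof
    fix w assume w: "w \<in> U"
    have 1: "scc_of E (V - set X) w \<subseteq> R" using gen_pos_closed[OF gp] w U_def by blast
    have 2: "scc_of E (V - set X) w \<subseteq> Zp V E X"
    proof (cases "X = []")
      case True then show ?thesis using scc_of_sub[of E "V - set X" w] Zp_def[of V E X] by auto
    next
      case False then show ?thesis using zone_closed[OF False] w U_def by blast
    qed
    show "scc_of E (V - set X) w \<subseteq> U" using 1 2 U_def by blast
  qed
  have exC: "\<exists>C. C \<in> sccs E (V - set X) \<and> C \<subseteq> R \<inter> Zp V E X \<and>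
      (\<forall>u w. (u,w) \<in> E \<longrightarrow> u \<in> R \<inter> Zp V E X - C \<longrightarrow> w \<notin> C)"
    using initial_scc_exists[OF finU Une UW cl] U_def by blast
  define C where "C = pickC V E X R"
  have C: "C \<in> sccs E (V - set X) \<and> C \<subseteq> R \<inter> Zp V E X \<and>
      (\<forall>u w. (u,w) \<in> E \<longrightarrow> u \<in> R \<inter> Zp V E X - C \<longrightarrow> w \<notin> C)"
    unfolding C_def pickC_def by (rule someI_ex[OF exC])
  have "strongly_connected E C" using sccs_sc[of C E "V - set X"] C by blast
  then have Cne: "C \<noteq> {}" unfolding strongly_connected_def by blast
  have "C \<subseteq> V" using C RV by blast
  then have finC: "finite C" using finV by (rule finite_subset)
  have fin: "finite ((\<lambda>u. cr E (C - {u})) ` C)" using finC by simp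
  have ne: "(\<lambda>u. cr E (C - {u})) ` C \<noteq> {}" using Cne by simp
  obtain v where v: "v \<in> C" "cr E (C - {v}) = Min ((\<lambda>u. cr E (C - {u})) ` C)"
    using Min_in[OF fin ne] by auto
  have exv: "\<exists>v. v \<in> C \<and> (\<forall>u \<in> C. cr E (C - {v}) \<le> cr E (C - {u}))"
    using v Min_le[OF fin] by (intro exI[of _ v]) simp
  have "pickv V E X R \<in> C \<and> (\<forall>u \<in> C. cr E (C - {pickv V E X R}) \<le> cr E (C - {u}))"
    unfolding pickv_def C_def[symmetric] by (rule someI_ex[OF exv])
  then show ?thesis using C C_def by simp
qed


lemma rule_cases:
  assumes dg: "digraph V E" and gp: "gen_pos g V E (X,R)" and inv: "Inv g V E X R"
  shows "(R = {} \<and> X = [] \<and> rule g V E (X,R) = [SOME v. v \<in> V]) \<or>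
         (X \<noteq> [] \<and> rule g V E (X,R) = butlast X \<and> (R = {} \<or> R \<inter> Zp V E X = {})) \<or>
         (R \<noteq> {} \<and> \<not> (X \<noteq> [] \<and> R \<inter> Zp V E X = {}) \<and> rule g V E (X,R) = X @ [pickv V E X R])"
  using rule_gen[OF gp] by auto

lemma rule_valid:
  assumes dg: "digraph V E" and gp: "gen_pos g V E (X,R)" and inv: "Inv g V E X R"
  shows "is_succ g V E (X,R) (rule g V E (X,R), {})"
proof -
  have XV: "set X \<subseteq> V" and RV: "R \<subseteq> V - set X" using gen_pos_basic[OF gp] by auto
  have dX: "distinct X" using inv unfolding Inv_def by simp
  have Vne: "V \<noteq> {}" using dg unfolding digraph_def by simp
  consider (a) "R = {} \<and> X = [] \<and> rule g V E (X,R) = [SOME v. v \<in> V]"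
    | (b) "X \<noteq> [] \<and> rule g V E (X,R) = butlast X"
    | (c) "R \<noteq> {} \<and> \<not> (X \<noteq> [] \<and> R \<inter> Zp V E X = {}) \<and> rule g V E (X,R) = X @ [pickv V E X R]"
    using rule_cases[OF dg gp inv] by blast
  then show ?thesis
  proof cases
    case a
    define v where "v = (SOME v. v \<in> V)"
    have v: "v \<in> V" unfolding v_def using Vne by (simp add: some_in_eq)
    have "gen_pos g V E ([v], {})" using gen_pos_empty[of "[v]" V g E] v by simp
    have r: "rule g V E (X,R) = [v]" using conjunct2[OF conjunct2[OF a]] v_def by simp
    show ?thesis unfolding is_succ_gen[OF gp] r using \<open>gen_pos g V E ([v], {})\<close> a by simp
  next
    case b
    have sb: "set (butlast X) \<subseteq> set X" using set_butlast_split[of X] b by auto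
    have "gen_pos g V E (butlast X, {})" using gen_pos_empty[of "butlast X" V g E] sb XV by simp
    moreover have "card ((set X - set (butlast X)) \<union> (set (butlast X) - set X)) = 1"
      using butlast_symdiff[OF dX] b by simp
    moreover have r: "rule g V E (X,R) = butlast X" using b by simp
    ultimately show ?thesis unfolding is_succ_gen[OF gp] r using prefixeq_butlast[of X] by simp
  next
    case c
    have pp: "pickv V E X R \<in> pickC V E X R" "pickC V E X R \<subseteq> R \<inter> Zp V E X"
      using pick_props[OF dg gp] c by blast+
    then have vR: "pickv V E X R \<in> V - set X" using RV by blast
    have "gen_pos g V E (X @ [pickv V E X R], {})" using gen_pos_empty[of "X @ [pickv V E X R]" V g E] XV vR by simp
    moreover have "(set X - set (X @ [pickv V E X R])) \<union> (set (X @ [pickv V E X R]) - set X) = {pickv V E X R}"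
      using vR by auto
    moreover have r: "rule g V E (X,R) = X @ [pickv V E X R]" using c by simp
    ultimately show ?thesis unfolding is_succ_gen[OF gp] r by simp
  qed
qed

lemma strat_eq_rule:
  assumes dg: "digraph V E" and gp: "gen_pos g V E (X,R)" and inv: "Inv g V E X R"
  shows "strat g V E (X,R) = rule g V E (X,R)"
  using rule_valid[OF assms] unfolding strat_def by auto


lemma succ_info:
  assumes "gen_pos g V E (X,R)" "is_succ g V E (X,R) (X',R')"
  shows "gen_pos g V E (X',R') \<and> (\<forall>v'\<in>R'. \<exists>v\<in>R. relg g E (V - (set X \<inter> set X')) v v')"
  using assms is_succ_gen by blast

lemma step_empty:
  assumes dg: "digraph V E" and gp: "gen_pos g V E (X,{})" and inv: "Inv g V E X {}"
    and su: "is_succ g V E (X,{}) (X',R')" and X': "X' = rule g V E (X,{})"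
  shows "R' = {} \<and> Inv g V E X' R'"
proof -
  have R': "R' = {}" using succ_info[OF gp su] by blast
  have dX: "distinct X" "length X \<le> 1 + cr E V" using inv unfolding Inv_def by auto
  have "distinct X' \<and> length X' \<le> 1 + cr E V"
  proof (cases "X = []")
    case True
    then show ?thesis using X' rule_gen[OF gp] by simp
  next
    case False
    then have "X' = butlast X" using X' rule_gen[OF gp] by simp
    then show ?thesis using dX distinct_butlast[of X] by simp
  qed
  then show ?thesis using R' unfolding Inv_def by simp
qed

lemma step_lift:
  assumes dg: "digraph V E" and gp: "gen_pos g V E (X,R)" and inv: "Inv g V E X R"
    and su: "is_succ g V E (X,R) (X',R')" and RnE: "R \<noteq> {}" and Xne: "X \<noteq> []"
    and RZ: "R \<inter> Zp V E X = {}" and X': "X' = butlast X"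
  shows "R' \<subseteq> R \<and> Inv g V E X' R' \<and> g \<noteq> GVSC"
proof -
  have gX: "good V E X" and pX: "Pedge V E X R" and dX: "distinct X" "length X \<le> 1 + cr E V"
    and vsc: "g = GVSC \<longrightarrow> R \<subseteq> Zp V E X"
    using inv RnE unfolding Inv_def by auto
  have gVSC: "g \<noteq> GVSC" using vsc RZ RnE by blast
  define Y where "Y = butlast X"
  define l where "l = last X"
  have XY: "X = Y @ [l]" using Xne Y_def l_def by simp
  have setX: "set X = insert l (set Y)" using XY by simp
  have gs: "goodstep V E Y l" using gX XY unfolding good_def by simp
  have lW: "l \<in> V - set Y" using gs unfolding goodstep_def by simp
  have Z: "Zp V E X = scc_of E (V - set Y) l" using XY Zp_snoc by metis
  have W: "V - (set X \<inter> set X') = V - set Y" using X' Y_def setX by auto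
  have RV: "R \<subseteq> V - set X" using gen_pos_basic[OF gp] by simp
  have sub: "R' \<subseteq> R"
  proof
    fix v' assume v': "v' \<in> R'"
    then obtain v where v: "v \<in> R" "relg g E (V - set Y) v v'" using succ_info[OF gp su] W by metis
    show "v' \<in> R"
    proof (cases "g \<in> {GI, GV}")
      case True
      then have r: "reach E (V - set Y) v v'" using v(2) unfolding relg_def by simp
      have sc: "succ_closed E (V - set X) R" using gp True unfolding gen_pos_def by auto
      have clo: "\<And>u w. (u,w) \<in> E \<Longrightarrow> u \<in> R \<Longrightarrow> w \<in> V - set Y \<Longrightarrow> w \<in> R"
      proof -
        fix u w assume uw: "(u,w) \<in> E" "u \<in> R" "w \<in> V - set Y"
        show "w \<in> R"
        proof (cases "w = l")
          case True
          then have "w \<in> scc_of E (V - set Y) l" using scc_of_self[OF lW] by simp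
          then have "u \<in> scc_of E (V - set Y) l" using pX XY uw unfolding Pedge_def by blast
          then show ?thesis using RZ Z uw(2) by blast
        next
          case False
          then have "w \<in> V - set X" using uw(3) setX by blast
          then show ?thesis using sc uw unfolding succ_closed_def by blast
        qed
      qed
      have "(v,v') \<in> (Er E (V - set Y))\<^sup>*" using r unfolding reach_def by simp
      then show ?thesis using succ_closed_path[of v v' E "V - set Y" R] clo v(1) by blast
    next
      case False
      then have vs: "v' \<in> scc_of E (V - set Y) v" using v(2) unfolding relg_def by simp
      have vW: "v \<in> V - set Y" using v(1) RV setX by blast
      have lnot: "l \<notin> scc_of E (V - set Y) v"
      proof
        assume "l \<in> scc_of E (V - set Y) v"
        then have "v \<in> scc_of E (V - set Y) l" using scc_of_sym by metis
        then show False using RZ Z v(1) by blast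
      qed
      have s1: "scc_of E (V - set Y) v \<subseteq> V - set X"
        using scc_of_sub[of E "V - set Y" v] lnot unfolding setX by auto
      have s2: "scc_of E (V - set Y) v \<subseteq> scc_of E (V - set X) v"
        using sc_sub_scc[OF scc_sc[OF vW] s1 scc_of_self[OF vW]] scc_of_eq[of v E "V - set Y" v] scc_of_self[OF vW]
        by simp
      show ?thesis using s2 vs gen_pos_closed[OF gp v(1)] by blast
    qed
  qed
  have "Inv g V E X' R'"
  proof -
    have pr: "prefix X' X" using X' prefixeq_butlast by simp
    have "distinct X'" using dX X' distinct_butlast by simp
    moreover have "length X' \<le> 1 + cr E V" using dX X' by simp
    moreover have "R' \<noteq> {} \<longrightarrow> good V E X' \<and> Pedge V E X' R' \<and> (g = GVSC \<longrightarrow> R' \<subseteq> Zp V E X')"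
      using good_prefix[OF gX pr] Pedge_prefix[OF pX pr sub] gVSC by simp
    ultimately show ?thesis unfolding Inv_def by simp
  qed
  then show ?thesis using sub gVSC by simp
qed


lemma step_place:
  assumes dg: "digraph V E" and gp: "gen_pos g V E (X,R)" and inv: "Inv g V E X R"
    and su: "is_succ g V E (X,R) (X',R')" and RnE: "R \<noteq> {}"
    and nl: "\<not> (X \<noteq> [] \<and> R \<inter> Zp V E X = {})" and X': "X' = X @ [pickv V E X R]"
  shows "R' \<subseteq> R \<and> card R' < card R \<and> Inv g V E X' R'"
proof -
  have gX: "good V E X" and pX: "Pedge V E X R" and dX: "distinct X"
    and vsc: "g = GVSC \<longrightarrow> R \<subseteq> Zp V E X"
    using inv RnE unfolding Inv_def by auto
  have finV: "finite V" using dg unfolding digraph_def by simp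
  define C where "C = pickC V E X R"
  define v where "v = pickv V E X R"
  have P: "C \<in> sccs E (V - set X)" "C \<subseteq> R \<inter> Zp V E X"
      "\<forall>u w. (u,w) \<in> E \<longrightarrow> u \<in> R \<inter> Zp V E X - C \<longrightarrow> w \<notin> C"
      "v \<in> C" "\<forall>u \<in> C. cr E (C - {v}) \<le> cr E (C - {u})"
    using pick_props[OF dg gp RnE nl] C_def v_def by auto
  have RV: "R \<subseteq> V - set X" using gen_pos_basic[OF gp] by simp
  have vR: "v \<in> R" using P by blast
  have vX: "v \<in> V - set X" using vR RV by blast
  have Cv: "scc_of E (V - set X) v = C" using sccs_eq[OF P(1) P(4)] .
  have W: "V - (set X \<inter> set X') = V - set X" using X' by auto
  have gp': "gen_pos g V E (X',R')" using succ_info[OF gp su] by blast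
  have sub: "R' \<subseteq> R"
  proof
    fix v' assume v': "v' \<in> R'"
    then obtain u where "u \<in> R" "relg g E (V - set X) u v'" using succ_info[OF gp su] W by metis
    then show "v' \<in> R" using relg_closed[OF gp] by blast
  qed
  have "R' \<subseteq> V - set X'" using gen_pos_basic[OF gp'] by simp
  then have "v \<notin> R'" using X' v_def by auto
  then have "R' \<subseteq> R - {v}" using sub by blast
  moreover have "finite R" using RV finV finite_subset by blast
  ultimately have card: "card R' < card R"
    using vR by (meson card_Diff1_less finite_Diff le_less_trans card_mono)
  have gs: "goodstep V E X v" unfolding goodstep_def using vX Cv P by simp
  have gX': "good V E X'"
    unfolding good_def X'
  proof (intro allI impI)
    fix Y x assume "prefix (Y @ [x]) (X @ [pickv V E X R])"
    then have "Y @ [x] = X @ [v] \<or> prefix (Y @ [x]) X" using v_def by simp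
    then show "goodstep V E Y x" using gs gX unfolding good_def by auto
  qed
  have pX': "Pedge V E X' R'"
    unfolding Pedge_def X'
  proof (intro allI impI)
    fix Y x u w assume pre: "prefix (Y @ [x]) (X @ [pickv V E X R])" and uw: "(u, w) \<in> E" "u \<in> R'"
        "w \<in> scc_of E (V - set Y) x"
    have uR: "u \<in> R" using uw(2) sub by blast
    from pre have "Y @ [x] = X @ [v] \<or> prefix (Y @ [x]) X" using v_def by simp
    then show "u \<in> scc_of E (V - set Y) x"
    proof
      assume "Y @ [x] = X @ [v]"
      then have Yx: "Y = X" "x = v" by auto
      then have wC: "w \<in> C" using uw(3) Cv by simp
      show ?thesis
      proof (rule ccontr)
        assume nu: "u \<notin> scc_of E (V - set Y) x"
        then have uC: "u \<notin> C" using Yx Cv by simp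
        show False
        proof (cases "u \<in> Zp V E X")
          case True
          then show False using P(3) uw(1) uR uC wC by blast
        next
          case False
          have Xne: "X \<noteq> []" using False uR RV Zp_def[of V E X] by auto
          define Y0 where "Y0 = butlast X"
          define l where "l = last X"
          have XY: "X = Y0 @ [l]" using Xne Y0_def l_def by simp
          have Z: "Zp V E X = scc_of E (V - set Y0) l" using XY Zp_snoc by metis
          have "w \<in> scc_of E (V - set Y0) l" using wC P(2) Z by blast
          then have "u \<in> scc_of E (V - set Y0) l" using pX XY uw(1) uR unfolding Pedge_def by blast
          then show False using False Z by simp
        qed
      qed
    next
      assume "prefix (Y @ [x]) X"
      then show ?thesis using pX uw(1) uR uw(3) unfolding Pedge_def by blast
    qed
  qed
  have len: "length X' \<le> 1 + cr E V" using good_bound[OF finV gX'] X' by simp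
  have dX': "distinct X'" using dX vX X' v_def by simp
  have vsc': "g = GVSC \<longrightarrow> R' \<subseteq> Zp V E X'"
  proof
    assume gv: "g = GVSC"
    have RS: "R \<in> sccs E (V - set X)" using gp gv RnE unfolding gen_pos_def by auto
    have Rv: "scc_of E (V - set X) v = R" using sccs_eq[OF RS vR] .
    have ZX': "Zp V E X' = C" using X' Zp_snoc Cv v_def by metis
    show "R' \<subseteq> Zp V E X'"
    proof
      fix v' assume "v' \<in> R'"
      then obtain u where u: "u \<in> R" "relg g E (V - set X) u v'" using succ_info[OF gp su] W by metis
      then have "v' \<in> scc_of E (V - set X) u" using gv unfolding relg_def by simp
      moreover have "scc_of E (V - set X) u = R" using sccs_eq[OF RS u(1)] .
      ultimately show "v' \<in> Zp V E X'" using ZX' Cv Rv by simp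
    qed
  qed
  show ?thesis using sub card len dX' gX' pX' vsc' unfolding Inv_def by simp
qed


lemma idx_Suc: "Suc i \<in> idx len \<Longrightarrow> i \<in> idx len"
  unfolding idx_def by (cases len) auto

lemma idx_0: "0 \<in> idx len"
  unfolding idx_def by (cases len) auto

definition mu :: "'a position \<Rightarrow> nat" where
  "mu p = 2 * card (snd p) + length (fst p)"

lemma Inv_Nil: "R \<subseteq> V \<Longrightarrow> Inv g V E [] R"
  unfolding Inv_def using good_Nil[of V E] Pedge_Nil[of V E R] Zp_def[of V E "[]"] by simp

lemma search_inv:
  assumes dg: "digraph V E" and cs: "complete_consistent_search g V E (strat g V E) f len"
  shows "i \<in> idx len \<Longrightarrow> (i = 0 \<and> special_pos g V E (f i)) \<or>
      (gen_pos g V E (f i) \<and> Inv g V E (fst (f i)) (snd (f i)))"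
proof (induction i)
  case 0
  have f0: "f 0 = ([], V)" using cs unfolding complete_consistent_search_def by simp
  have "is_pos g V E (f 0)" using cs 0 unfolding complete_consistent_search_def by blast
  then show ?case using f0 Inv_Nil[of V V g E] unfolding is_pos_def by auto
next
  case (Suc i)
  have ii: "i \<in> idx len" using idx_Suc[OF Suc.prems] .
  have su: "is_succ g V E (f i) (f (Suc i))" and fs: "fst (f (Suc i)) = strat g V E (f i)"
    using cs Suc.prems unfolding complete_consistent_search_def by auto
  from Suc.IH[OF ii] show ?case
  proof
    assume sp: "i = 0 \<and> special_pos g V E (f i)"
    then have spf: "special_pos g V E (f i)" by (rule conjunct2)
    have "gen_pos g V E (f (Suc i)) \<and> fst (f (Suc i)) = []" using su spf unfolding is_succ_def by simp
    moreover obtain X' R' where q: "f (Suc i) = (X', R')" by fastforce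
    ultimately show ?thesis using gen_pos_basic[of g V E X' R'] Inv_Nil[of R' V g E] by auto
  next
    assume gi: "gen_pos g V E (f i) \<and> Inv g V E (fst (f i)) (snd (f i))"
    obtain X R where p: "f i = (X, R)" by fastforce
    obtain X' R' where q: "f (Suc i) = (X', R')" by fastforce
    have gp: "gen_pos g V E (X,R)" and inv: "Inv g V E X R" using gi p by auto
    have su': "is_succ g V E (X,R) (X',R')" using su p q by simp
    have X': "X' = rule g V E (X,R)" using fs p q strat_eq_rule[OF dg gp inv] by simp
    have gp': "gen_pos g V E (X',R')" using succ_info[OF gp su'] by blast
    consider (a) "R = {}"
      | (b) "R \<noteq> {}" "X \<noteq> []" "R \<inter> Zp V E X = {}"
      | (c) "R \<noteq> {}" "\<not> (X \<noteq> [] \<and> R \<inter> Zp V E X = {})" by blast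
    then have "Inv g V E X' R'"
    proof cases
      case a
      have "gen_pos g V E (X,{})" "Inv g V E X {}" "is_succ g V E (X,{}) (X',R')" "X' = rule g V E (X,{})"
        using gp inv su' X' a by simp_all
      then show ?thesis using step_empty[OF dg] by blast
    next
      case b
      then have "X' = butlast X" using X' rule_gen[OF gp] by simp
      then show ?thesis using step_lift[OF dg gp inv su' b] by blast
    next
      case c
      then have "X' = X @ [pickv V E X R]" using X' rule_gen[OF gp] by auto
      then show ?thesis using step_place[OF dg gp inv su' c] by blast
    qed
    then show ?thesis using gp' q by simp
  qed
qed

lemma search_trans:
  assumes dg: "digraph V E" and cs: "complete_consistent_search g V E (strat g V E) f len"
    and si: "Suc i \<in> idx len"
  shows "snd (f (Suc i)) \<subseteq> snd (f i) \<and> (snd (f i) \<noteq> {} \<longrightarrow> mu (f (Suc i)) < mu (f i)) \<and>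
    (g = GVSC \<longrightarrow> snd (f i) \<noteq> {} \<longrightarrow> prefix (fst (f i)) (fst (f (Suc i))))"
proof -
  have ii: "i \<in> idx len" using idx_Suc[OF si] .
  have finV: "finite V" using dg unfolding digraph_def by simp
  have su: "is_succ g V E (f i) (f (Suc i))" and fs: "fst (f (Suc i)) = strat g V E (f i)"
    using cs si unfolding complete_consistent_search_def by auto
  obtain X R where p: "f i = (X, R)" by fastforce
  obtain X' R' where q: "f (Suc i) = (X', R')" by fastforce
  from search_inv[OF dg cs ii] show ?thesis
  proof
    assume sp: "i = 0 \<and> special_pos g V E (f i)"
    then have g1: "gen_pos g V E (X',R')" "X' = []" using su p q unfolding is_succ_def by auto
    have XR: "X = []" "R = V" "\<not> gen_pos g V E ([], V)" using sp p unfolding special_pos_def by auto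
    have "R' \<subseteq> V" using gen_pos_basic[OF g1(1)] by blast
    moreover have "R' \<noteq> V" using g1 XR(3) by auto
    ultimately have "card R' < card V" using finV by (meson psubsetI psubset_card_mono)
    then show ?thesis using p q XR g1 \<open>R' \<subseteq> V\<close> unfolding mu_def by simp
  next
    assume gi: "gen_pos g V E (f i) \<and> Inv g V E (fst (f i)) (snd (f i))"
    have gp: "gen_pos g V E (X,R)" and inv: "Inv g V E X R" using gi p by auto
    have su': "is_succ g V E (X,R) (X',R')" using su p q by simp
    have X': "X' = rule g V E (X,R)" using fs p q strat_eq_rule[OF dg gp inv] by simp
    have RV: "R \<subseteq> V - set X" using gen_pos_basic[OF gp] by simp
    have finR: "finite R" using RV finV finite_subset by blast
    consider (a) "R = {}"
      | (b) "R \<noteq> {}" "X \<noteq> []" "R \<inter> Zp V E X = {}"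
      | (c) "R \<noteq> {}" "\<not> (X \<noteq> [] \<and> R \<inter> Zp V E X = {})" by blast
    then show ?thesis
    proof cases
      case a
      have "gen_pos g V E (X,{})" "Inv g V E X {}" "is_succ g V E (X,{}) (X',R')" "X' = rule g V E (X,{})"
        using gp inv su' X' a by simp_all
      then have "R' = {}" using step_empty[OF dg] by blast
      then show ?thesis using a p q by simp
    next
      case b
      then have X'b: "X' = butlast X" using X' rule_gen[OF gp] by simp
      have r: "R' \<subseteq> R" "g \<noteq> GVSC" using step_lift[OF dg gp inv su' b X'b] by auto
      have "card R' \<le> card R" using r(1) finR card_mono by blast
      moreover have "length X' < length X" using X'b b(2) by simp
      ultimately show ?thesis using r p q unfolding mu_def by simp
    next
      case c
      then have X'c: "X' = X @ [pickv V E X R]" using X' rule_gen[OF gp] by auto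
      have r: "R' \<subseteq> R" "card R' < card R" using step_place[OF dg gp inv su' c X'c] by auto
      then show ?thesis using p q X'c unfolding mu_def by simp
    qed
  qed
qed

theorem upper_bound:
  assumes dg: "digraph V E"
  shows "is_strategy g V E (strat g V E) \<and> winning_strat g V E (strat g V E) \<and>
    monotone_strat g V E (strat g V E) \<and> uses_at_most g V E (strat g V E) (1 + cr E V) \<and>
    (g = GVSC \<longrightarrow> stationary_strat g V E (strat g V E))"
proof -
  have Vne: "V \<noteq> {}" using dg unfolding digraph_def by simp
  have win: "winning_strat g V E (strat g V E)"
    unfolding winning_strat_def
  proof (intro allI impI)
    fix f len assume cs: "complete_consistent_search g V E (strat g V E) f len"
    show "\<exists>i\<in>idx len. snd (f i) = {}"
    proof (cases len)
      case (Some n)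
      then show ?thesis using cs unfolding complete_consistent_search_def by auto
    next
      case None
      show ?thesis
      proof (rule ccontr)
        assume "\<not> (\<exists>i\<in>idx len. snd (f i) = {})"
        then have ne: "\<And>i. snd (f i) \<noteq> {}" using None unfolding idx_def by simp
        have dec: "\<And>i. mu (f (Suc i)) < mu (f i)"
          using search_trans[OF dg cs] ne None unfolding idx_def by simp
        have "\<And>i. mu (f i) + i \<le> mu (f 0)"
        proof -
          fix i show "mu (f i) + i \<le> mu (f 0)"
          proof (induction i)
            case 0 then show ?case by simp
          next
            case (Suc i) then show ?case using dec[of i] by simp
          qed
        qed
        then have "mu (f (Suc (mu (f 0)))) + Suc (mu (f 0)) \<le> mu (f 0)" by blast
        then show False by simp
      qed
    qed
  qed
  have mon: "monotone_strat g V E (strat g V E)"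
    unfolding monotone_strat_def using search_trans[OF dg] by blast
  have uses: "uses_at_most g V E (strat g V E) (1 + cr E V)"
    unfolding uses_at_most_def
  proof (intro allI impI ballI)
    fix f len i assume cs: "complete_consistent_search g V E (strat g V E) f len" and ii: "i \<in> idx len"
    from search_inv[OF dg cs ii] show "length (fst (f i)) \<le> 1 + cr E V"
    proof
      assume "i = 0 \<and> special_pos g V E (f i)"
      then show ?thesis unfolding special_pos_def by auto
    next
      assume "gen_pos g V E (f i) \<and> Inv g V E (fst (f i)) (snd (f i))"
      then show ?thesis unfolding Inv_def by simp
    qed
  qed
  have st: "g = GVSC \<longrightarrow> stationary_strat g V E (strat g V E)"
    unfolding stationary_strat_def using search_trans[OF dg] by blast
  show ?thesis using strat_is_strategy[OF Vne] win mon uses st by blast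
qed





definition H0 :: "'a set \<Rightarrow> ('a \<times> 'a) set \<Rightarrow> 'a set" where
  "H0 V E = (SOME D. D \<in> sccs E V \<and> cr E V \<le> cr E D)"

definition hstep :: "('a \<times> 'a) set \<Rightarrow> 'a set \<Rightarrow> 'a \<Rightarrow> 'a set" where
  "hstep E H x = (if x \<notin> H then H else if H - {x} = {} then {}
     else SOME D. D \<in> sccs E (H - {x}) \<and> cr E (H - {x}) \<le> cr E D)"

definition Hs :: "'a set \<Rightarrow> ('a \<times> 'a) set \<Rightarrow> 'a list \<Rightarrow> 'a set" where
  "Hs V E X = foldl (hstep E) (H0 V E) X"

definition Rob :: "gvar \<Rightarrow> 'a set \<Rightarrow> ('a \<times> 'a) set \<Rightarrow> 'a list \<Rightarrow> 'a set" where
  "Rob g V E X = (if g \<in> {GI, GV} then {w. \<exists>h \<in> Hs V E X. reach E (V - set X) h w} else Hs V E X)"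

lemma fin_sub: "digraph V E \<Longrightarrow> S \<subseteq> V \<Longrightarrow> finite S"
  unfolding digraph_def using finite_subset by blast

lemma Hs_Nil: "Hs V E [] = H0 V E" unfolding Hs_def by simp
lemma Hs_snoc: "Hs V E (X @ [x]) = hstep E (Hs V E X) x" unfolding Hs_def by simp

lemma H0_props:
  assumes "digraph V E"
  shows "H0 V E \<in> sccs E V \<and> cr E V \<le> cr E (H0 V E)"
proof -
  have "finite V" "V \<noteq> {}" using assms unfolding digraph_def by auto
  then have "\<exists>D. D \<in> sccs E V \<and> cr E V \<le> cr E D" using cr_max_scc[of V E] by blast
  then show ?thesis unfolding H0_def by (rule someI_ex)
qed

lemma hstep_props:
  assumes "finite H"
  shows "hstep E H x \<subseteq> H - {x} \<and>
     (x \<in> H \<longrightarrow> H - {x} \<noteq> {} \<longrightarrow> hstep E H x \<in> sccs E (H - {x}) \<and> cr E (H - {x}) \<le> cr E (hstep E H x))"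
proof (cases "x \<in> H \<and> H - {x} \<noteq> {}")
  case True
  have "finite (H - {x})" using assms by simp
  then have "\<exists>D. D \<in> sccs E (H - {x}) \<and> cr E (H - {x}) \<le> cr E D" using cr_max_scc[of "H - {x}" E] True by blast
  then have D0: "(SOME D. D \<in> sccs E (H - {x}) \<and> cr E (H - {x}) \<le> cr E D) \<in> sccs E (H - {x}) \<and>
      cr E (H - {x}) \<le> cr E (SOME D. D \<in> sccs E (H - {x}) \<and> cr E (H - {x}) \<le> cr E D)"
    by (rule someI_ex)
  have hs: "hstep E H x = (SOME D. D \<in> sccs E (H - {x}) \<and> cr E (H - {x}) \<le> cr E D)"
    unfolding hstep_def using True by simp
  have D: "hstep E H x \<in> sccs E (H - {x}) \<and> cr E (H - {x}) \<le> cr E (hstep E H x)"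
    unfolding hs by (rule D0)
  then have "hstep E H x \<subseteq> H - {x}" using sccs_sc[of "hstep E H x" E "H - {x}"] by blast
  then show ?thesis using D by simp
next
  case False
  then show ?thesis unfolding hstep_def by auto
qed

lemma Hs_sub:
  assumes "digraph V E"
  shows "Hs V E X \<subseteq> V - set X"
proof (induction X rule: rev_induct)
  case Nil
  then show ?case using H0_props[OF assms] sccs_sc[of "H0 V E" E V] Hs_Nil[of V E] by simp
next
  case (snoc x X)
  have "Hs V E X \<subseteq> V" using snoc.IH by blast
  then have "finite (Hs V E X)" using fin_sub[OF assms] by blast
  then have "hstep E (Hs V E X) x \<subseteq> Hs V E X - {x}" using hstep_props[of "Hs V E X" E x] by blast
  then show ?case using snoc.IH Hs_snoc[of V E X x] by auto
qed

lemma Hs_prefix: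
  "prefix X X' \<Longrightarrow> digraph V E \<Longrightarrow> Hs V E X' \<subseteq> Hs V E X"
proof (induction X' rule: rev_induct)
  case Nil then show ?case by simp
next
  case (snoc x Y)
  show ?case
  proof (cases "X = Y @ [x]")
    case True then show ?thesis by simp
  next
    case False
    then have "prefix X Y" using snoc.prems by simp
    then have 1: "Hs V E Y \<subseteq> Hs V E X" using snoc.IH snoc.prems(2) by blast
    have "finite (Hs V E Y)" using Hs_sub[OF snoc.prems(2), of Y] fin_sub[OF snoc.prems(2), of "Hs V E Y"] by blast
    then have "hstep E (Hs V E Y) x \<subseteq> Hs V E Y" using hstep_props[of "Hs V E Y" E x] by blast
    then show ?thesis using 1 Hs_snoc[of V E Y x] by simp
  qed
qed

lemma scc_remove_outside:
  assumes "H \<in> sccs E W" "x \<notin> H"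
  shows "H \<in> sccs E (W - {x})"
proof -
  have sc: "strongly_connected E H" "H \<subseteq> W" using sccs_sc[OF assms(1)] by auto
  obtain h where h: "h \<in> H" using sc(1) unfolding strongly_connected_def by blast
  have Hh: "scc_of E W h = H" using sccs_eq[OF assms(1) h] .
  have "scc_of E (W - {x}) h \<subseteq> H" using scc_of_mono[of "W - {x}" W E h] Hh by blast
  moreover have "H \<subseteq> scc_of E (W - {x}) h" using sc_sub_scc[OF sc(1) _ h, of "W - {x}"] sc(2) assms(2) by blast
  ultimately have "scc_of E (W - {x}) h = H" by blast
  moreover have "h \<in> W - {x}" using h sc(2) assms(2) by blast
  ultimately show ?thesis using sccs_I[of h "W - {x}" E] by simp
qed

lemma scc_sub_lift:
  assumes "H \<in> sccs E W" "D \<in> sccs E (H - {x})"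
  shows "D \<in> sccs E (W - {x})"
proof -
  have scH: "strongly_connected E H" "H \<subseteq> W" using sccs_sc[OF assms(1)] by auto
  have scD: "strongly_connected E D" "D \<subseteq> H - {x}" using sccs_sc[OF assms(2)] by auto
  obtain d where d: "d \<in> D" using scD(1) unfolding strongly_connected_def by blast
  have dW: "d \<in> W - {x}" using d scD(2) scH(2) by blast
  have dH: "d \<in> H" using d scD(2) by blast
  have "D \<subseteq> scc_of E (W - {x}) d" using sc_sub_scc[OF scD(1) _ d, of "W - {x}"] scD(2) scH(2) by blast
  moreover have "scc_of E (W - {x}) d \<subseteq> D"
  proof -
    have 1: "scc_of E (W - {x}) d \<subseteq> scc_of E W d" using scc_of_mono[of "W - {x}" W E d] by blast
    have 2: "scc_of E W d = H" using sccs_eq[OF assms(1) dH] .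
    have 3: "scc_of E (W - {x}) d \<subseteq> H - {x}" using 1 2 scc_of_sub[of E "W - {x}" d] by blast
    have 4: "scc_of E (W - {x}) d \<subseteq> scc_of E (H - {x}) d"
      using sc_sub_scc[OF scc_sc[OF dW] 3 scc_of_self[OF dW]] .
    have 5: "scc_of E (H - {x}) d = D" using sccs_eq[OF assms(2) d] .
    show ?thesis using 4 5 by simp
  qed
  ultimately have "scc_of E (W - {x}) d = D" by blast
  then show ?thesis using sccs_I[OF dW, of E] by simp
qed

lemma Hs_scc:
  assumes "digraph V E"
  shows "Hs V E X = {} \<or> Hs V E X \<in> sccs E (V - set X)"
proof (induction X rule: rev_induct)
  case Nil
  then show ?case using H0_props[OF assms] Hs_Nil[of V E] by simp
next
  case (snoc x X)
  define H where "H = Hs V E X"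
  have finH: "finite H" using Hs_sub[OF assms, of X] fin_sub[OF assms, of H] H_def by blast
  have eqW: "V - set (X @ [x]) = (V - set X) - {x}" by auto
  show ?case
  proof (cases "H = {}")
    case True
    then show ?thesis using Hs_snoc[of V E X x] H_def unfolding hstep_def by simp
  next
    case False
    then have HS: "H \<in> sccs E (V - set X)" using snoc H_def by simp
    show ?thesis
    proof (cases "x \<in> H")
      case False
      then have "hstep E H x = H" unfolding hstep_def by simp
      then show ?thesis using scc_remove_outside[OF HS False] Hs_snoc[of V E X x] H_def eqW by simp
    next
      case xH: True
      show ?thesis
      proof (cases "H - {x} = {}")
        case True
        then have "hstep E H x = {}" unfolding hstep_def using xH by simp
        then show ?thesis using Hs_snoc[of V E X x] H_def by simp
      next
        case False
        then have "hstep E H x \<in> sccs E (H - {x})" using hstep_props[OF finH, of E x] xH by blast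
        then show ?thesis using scc_sub_lift[OF HS] Hs_snoc[of V E X x] H_def eqW by simp
      qed
    qed
  qed
qed

lemma Hs_cr:
  assumes dg: "digraph V E"
  shows "length X \<le> cr E V \<Longrightarrow> Hs V E X \<noteq> {} \<and> cr E V \<le> cr E (Hs V E X) + length X"
proof (induction X rule: rev_induct)
  case Nil
  have "H0 V E \<noteq> {}" using H0_props[OF dg] sccs_sc[of "H0 V E" E V] unfolding strongly_connected_def by blast
  then show ?case using H0_props[OF dg] Hs_Nil[of V E] by simp
next
  case (snoc x X)
  define H where "H = Hs V E X"
  have IH: "H \<noteq> {}" "cr E V \<le> cr E H + length X" using snoc H_def by auto
  have finH: "finite H" using Hs_sub[OF dg, of X] fin_sub[OF dg, of H] H_def by blast
  have HS: "H \<in> sccs E (V - set X)" using Hs_scc[OF dg, of X] IH H_def by simp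
  have crH: "1 \<le> cr E H" using IH snoc.prems by simp
  show ?case
  proof (cases "x \<in> H")
    case False
    then have "Hs V E (X @ [x]) = H" using Hs_snoc[of V E X x] H_def unfolding hstep_def by simp
    then show ?thesis using IH by simp
  next
    case True
    have scH: "strongly_connected E H" using sccs_sc[OF HS] by blast
    have cyH: "\<not> acyclic_on E H" using cr_acyclic[OF finH] crH by auto
    have noloop: "\<forall>v. (v,v) \<notin> E" using dg unfolding digraph_def by simp
    have ne: "H - {x} \<noteq> {}"
    proof
      assume "H - {x} = {}"
      then have "H = {x}" using True by blast
      then have "acyclic_on E H" using noloop_acyclic[OF noloop] by simp
      then show False using cyH by simp
    qed
    have fin: "finite ((\<lambda>v. cr E (H - {v})) ` H)" using finH by simp
    have "Min ((\<lambda>v. cr E (H - {v})) ` H) \<le> cr E (H - {x})" using Min_le[OF fin] True by simp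
    then have c1: "cr E H \<le> 1 + cr E (H - {x})" using cr_sc[OF finH cyH scH] by simp
    have D: "hstep E H x \<in> sccs E (H - {x})" "cr E (H - {x}) \<le> cr E (hstep E H x)"
      using hstep_props[OF finH, of E x] True ne by blast+
    have "hstep E H x \<noteq> {}" using sccs_sc[OF D(1)] unfolding strongly_connected_def by blast
    then show ?thesis using Hs_snoc[of V E X x] H_def IH c1 D(2) by simp
  qed
qed


lemma Rob_sub': "digraph V E \<Longrightarrow> Rob g V E X \<subseteq> V - set X"
proof -
  assume dg: "digraph V E"
  show ?thesis
  proof (cases "g \<in> {GI, GV}")
    case True
    then show ?thesis unfolding Rob_def using reach_in[of E "V - set X"] by auto
  next
    case False
    then show ?thesis unfolding Rob_def using Hs_sub[OF dg, of X] by simp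
  qed
qed

lemma Hs_Rob: "digraph V E \<Longrightarrow> Hs V E X \<subseteq> Rob g V E X"
proof -
  assume dg: "digraph V E"
  have "Hs V E X \<subseteq> V - set X" using Hs_sub[OF dg] .
  then show ?thesis unfolding Rob_def using reach_refl[of _ "V - set X" E] by auto
qed

lemma path_enters:
  assumes "(a,b) \<in> r\<^sup>*" "a \<notin> C" "b \<in> C"
  shows "\<exists>u w. (u,w) \<in> r \<and> u \<notin> C \<and> w \<in> C"
  using assms
proof (induction rule: rtrancl_induct)
  case base then show ?case by simp
next
  case (step y z)
  show ?case
  proof (cases "y \<in> C")
    case True then show ?thesis using step.IH step.prems(1) by blast
  next
    case False then show ?thesis using step.hyps(2) step.prems(2) by blast
  qed
qed

lemma Rob_gen:
  assumes dg: "digraph V E" and XV: "set X \<subseteq> V"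
  shows "gen_pos g V E (X, Rob g V E X)"
proof -
  define W where "W = V - set X"
  define H where "H = Hs V E X"
  have HW: "H \<subseteq> W" using Hs_sub[OF dg] H_def W_def by simp
  have Hsc: "H = {} \<or> H \<in> sccs E W" using Hs_scc[OF dg, of X] H_def W_def by simp
  have RobW: "Rob g V E X \<subseteq> W" using Rob_sub'[OF dg] W_def by simp
  define Rc where "Rc = {w. \<exists>h \<in> H. reach E W h w}"
  have Rc: "g \<in> {GI, GV} \<Longrightarrow> Rob g V E X = Rc" unfolding Rob_def Rc_def H_def W_def by simp
  have RcW: "Rc \<subseteq> W" unfolding Rc_def using reach_in[of E W] by blast
  have scRc: "succ_closed E W Rc"
    unfolding succ_closed_def
  proof (intro conjI allI impI)
    show "Rc \<subseteq> W" by (rule RcW)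
  next
    fix u v assume uv: "(u,v) \<in> E" "u \<in> Rc" "v \<in> W"
    then obtain h where h: "h \<in> H" "reach E W h u" unfolding Rc_def by blast
    have "reach E W u v" using reach_edge[OF uv(1) _ uv(3)] RcW uv(2) by blast
    then show "v \<in> Rc" unfolding Rc_def using h reach_trans[of E W h u v] by blast
  qed
  have uniq: "Rc = {} \<or> (\<exists>!C. initial_comp E Rc C)"
  proof (cases "H = {}")
    case True then show ?thesis unfolding Rc_def by simp
  next
    case False
    then have HS: "H \<in> sccs E W" using Hsc by simp
    obtain h where hH: "h \<in> H" using False by blast
    have HRc: "H \<subseteq> Rc" unfolding Rc_def using HW reach_refl[of _ W E] by blast
    have reachRc: "\<And>a b. a \<in> Rc \<Longrightarrow> reach E W a b \<Longrightarrow> reach E Rc a b"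
    proof -
      fix a b assume a: "a \<in> Rc" "reach E W a b"
      have "(a,b) \<in> (Er E W)\<^sup>*" using a(2) unfolding reach_def by simp
      then have "b \<in> Rc \<and> (a,b) \<in> (Er E Rc)\<^sup>*"
        using succ_closed_path[of a b E W Rc] a(1) scRc unfolding succ_closed_def by blast
      then show "reach E Rc a b" using a(1) unfolding reach_def by simp
    qed
    have sccRc: "scc_of E Rc h = H"
    proof
      show "scc_of E Rc h \<subseteq> H"
        using scc_of_mono[of Rc W E h] RcW sccs_eq[OF HS hH] by blast
    next
      show "H \<subseteq> scc_of E Rc h"
      proof
        fix y assume y: "y \<in> H"
        have "y \<in> scc_of E W h" using sccs_eq[OF HS hH] y by simp
        then have "reach E W h y" "reach E W y h" unfolding scc_of_def by auto
        then have "reach E Rc h y" "reach E Rc y h" using reachRc HRc hH y by blast+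
        then show "y \<in> scc_of E Rc h" unfolding scc_of_def by simp
      qed
    qed
    have HinRc: "H \<in> sccs E Rc" using sccs_I[of h Rc E] HRc hH sccRc by auto
    have init: "initial_comp E Rc H"
      unfolding initial_comp_def
    proof (intro conjI notI)
      show "H \<in> sccs E Rc" by (rule HinRc)
    next
      assume "\<exists>u v. (u, v) \<in> E \<and> u \<in> Rc - H \<and> v \<in> H"
      then obtain u v where uv: "(u,v) \<in> E" "u \<in> Rc - H" "v \<in> H" by blast
      obtain h' where h': "h' \<in> H" "reach E W h' u" using uv(2) unfolding Rc_def by blast
      have vW: "v \<in> W" "u \<in> W" using uv HW RcW by blast+
      have "reach E W u v" using reach_edge[OF uv(1) vW(2) vW(1)] .
      moreover have "v \<in> scc_of E W h'" using sccs_eq[OF HS h'(1)] uv(3) by simp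
      ultimately have "reach E W u h'" unfolding scc_of_def using reach_trans[of E W u v h'] by blast
      then have "u \<in> scc_of E W h'" using h'(2) unfolding scc_of_def by simp
      then show False using sccs_eq[OF HS h'(1)] uv(2) by simp
    qed
    have "\<And>C. initial_comp E Rc C \<Longrightarrow> C = H"
    proof -
      fix C assume C: "initial_comp E Rc C"
      have CS: "C \<in> sccs E Rc" using C unfolding initial_comp_def by simp
      obtain c where c: "c \<in> C" using sccs_sc[OF CS] unfolding strongly_connected_def by blast
      have cRc: "c \<in> Rc" using c sccs_sc[OF CS] by blast
      obtain h' where h': "h' \<in> H" "reach E W h' c" using cRc unfolding Rc_def by blast
      have "reach E Rc h' c" using reachRc[OF _ h'(2)] HRc h'(1) by blast
      then have path: "(h',c) \<in> (Er E Rc)\<^sup>*" unfolding reach_def by simp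
      show "C = H"
      proof (cases "h' \<in> C")
        case True
        have "C = scc_of E Rc h'" using sccs_eq[OF CS True] by simp
        also have "\<dots> = scc_of E Rc h" using sccRc sccs_eq[OF HinRc h'(1)] by simp
        finally show ?thesis using sccRc by simp
      next
        case False
        obtain u w where uw: "(u,w) \<in> Er E Rc" "u \<notin> C" "w \<in> C"
          using path_enters[OF path False c] by blast
        then have "(u,w) \<in> E" "u \<in> Rc" unfolding Er_def by auto
        then show ?thesis using C uw unfolding initial_comp_def by blast
      qed
    qed
    then show ?thesis using init by blast
  qed
  show ?thesis
  proof (cases g)
    case GI
    then show ?thesis unfolding gen_pos_def using XV RobW Rc scRc W_def by simp
  next
    case GV
    then show ?thesis unfolding gen_pos_def using XV RobW Rc scRc uniq W_def by simp
  next
    case GISC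
    have "union_sccs E W H"
      unfolding union_sccs_def using HW Hsc sccs_eq[of H E W] by auto
    moreover have "Rob g V E X = H" using GISC unfolding Rob_def H_def by simp
    ultimately show ?thesis unfolding gen_pos_def using XV RobW GISC W_def by simp
  next
    case GVSC
    moreover have "Rob g V E X = H" using GVSC unfolding Rob_def H_def by simp
    ultimately show ?thesis unfolding gen_pos_def using XV RobW Hsc W_def by simp
  qed
qed


lemma rob_rel:
  assumes dg: "digraph V E" and len: "length X \<le> cr E V"
    and pre: "prefix X X' \<or> prefix X' X" and v': "v' \<in> Rob g V E X'"
  shows "\<exists>v \<in> Rob g V E X. relg g E (V - (set X \<inter> set X')) v v'"
  using pre
proof
  assume pr: "prefix X X'"
  then have ss: "set X \<subseteq> set X'" by (metis prefixE set_append Un_upper1)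
  have W: "V - (set X \<inter> set X') = V - set X" using ss by auto
  have HH: "Hs V E X' \<subseteq> Hs V E X" using Hs_prefix[OF pr dg] .
  show ?thesis
  proof (cases "g \<in> {GI, GV}")
    case True
    then obtain h where h: "h \<in> Hs V E X'" "reach E (V - set X') h v'" using v' unfolding Rob_def by auto
    have "reach E (V - set X) h v'" using reach_mono[OF h(2)] ss by blast
    moreover have "h \<in> Rob g V E X" using Hs_Rob[OF dg] HH h(1) by blast
    ultimately show ?thesis using True W unfolding relg_def by auto
  next
    case False
    then have vH: "v' \<in> Hs V E X'" using v' unfolding Rob_def by simp
    then have v1: "v' \<in> Hs V E X" using HH by blast
    then have "v' \<in> V - set X" using Hs_sub[OF dg] by blast
    then have "v' \<in> scc_of E (V - set X) v'" using scc_of_self by metis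
    moreover have "v' \<in> Rob g V E X" using v1 Hs_Rob[OF dg] by blast
    ultimately show ?thesis using False W unfolding relg_def by auto
  qed
next
  assume pr: "prefix X' X"
  then have ss: "set X' \<subseteq> set X" by (metis prefixE set_append Un_upper1)
  have W: "V - (set X \<inter> set X') = V - set X'" using ss by auto
  have HH: "Hs V E X \<subseteq> Hs V E X'" using Hs_prefix[OF pr dg] .
  have Hne: "Hs V E X \<noteq> {}" using Hs_cr[OF dg len] by blast
  then obtain v where v: "v \<in> Hs V E X" by blast
  have vX': "v \<in> Hs V E X'" using v HH by blast
  then have HS: "Hs V E X' \<in> sccs E (V - set X')" using Hs_scc[OF dg, of X'] by auto
  have sv: "scc_of E (V - set X') v = Hs V E X'" using sccs_eq[OF HS vX'] .
  have vR: "v \<in> Rob g V E X" using v Hs_Rob[OF dg] by blast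
  show ?thesis
  proof (cases "g \<in> {GI, GV}")
    case True
    then obtain h where h: "h \<in> Hs V E X'" "reach E (V - set X') h v'" using v' unfolding Rob_def by auto
    have "reach E (V - set X') v h" using h(1) sv unfolding scc_of_def by auto
    then have "reach E (V - set X') v v'" using reach_trans h(2) by metis
    then show ?thesis using True W vR unfolding relg_def by auto
  next
    case False
    then have "v' \<in> Hs V E X'" using v' unfolding Rob_def by simp
    then have "v' \<in> scc_of E (V - set X') v" using sv by simp
    then show ?thesis using False W vR unfolding relg_def by auto
  qed
qed

lemma is_succ_target: "is_succ g V E p q \<Longrightarrow> gen_pos g V E q"
  unfolding is_succ_def by (auto split: if_splits)

lemma lb_step:
  assumes dg: "digraph V E" and st: "is_strategy g V E \<sigma>" and ip: "is_pos g V E p"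
    and len: "length (fst p) \<le> cr E V" and sub: "Rob g V E (fst p) \<subseteq> snd p"
  shows "is_succ g V E p (\<sigma> p, if length (\<sigma> p) \<le> cr E V then Rob g V E (\<sigma> p) else {})"
proof -
  obtain R0 where R0: "is_succ g V E p (\<sigma> p, R0)" using st ip unfolding is_strategy_def by blast
  have gq0: "gen_pos g V E (\<sigma> p, R0)" using is_succ_target[OF R0] .
  have sV: "set (\<sigma> p) \<subseteq> V" using gen_pos_basic[OF gq0] by simp
  define Rq where "Rq = (if length (\<sigma> p) \<le> cr E V then Rob g V E (\<sigma> p) else {})"
  have gq: "gen_pos g V E (\<sigma> p, Rq)" unfolding Rq_def using Rob_gen[OF dg sV] gen_pos_empty[OF sV] by simp
  show ?thesis
  proof (cases "special_pos g V E p")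
    case True
    then have "\<sigma> p = []" using R0 unfolding is_succ_def by simp
    then show ?thesis using True gq unfolding is_succ_def Rq_def by simp
  next
    case False
    obtain X R where p: "p = (X,R)" by fastforce
    have gp: "gen_pos g V E (X,R)" using ip False p unfolding is_pos_def by simp
    have i0: "prefix X (\<sigma> p) \<or> prefix (\<sigma> p) X" "card ((set X - set (\<sigma> p)) \<union> (set (\<sigma> p) - set X)) = 1"
      using R0 p is_succ_gen[OF gp] by auto
    have rel: "\<forall>v'\<in>Rq. \<exists>v\<in>R. relg g E (V - (set X \<inter> set (\<sigma> p))) v v'"
    proof
      fix v' assume "v' \<in> Rq"
      then have v': "v' \<in> Rob g V E (\<sigma> p)" unfolding Rq_def by (simp split: if_splits)
      obtain v where "v \<in> Rob g V E X" "relg g E (V - (set X \<inter> set (\<sigma> p))) v v'"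
        using rob_rel[OF dg _ i0(1) v'] len p by auto
      then show "\<exists>v\<in>R. relg g E (V - (set X \<inter> set (\<sigma> p))) v v'" using sub p by auto
    qed
    have "is_succ g V E (X,R) (\<sigma> p, Rq)"
      unfolding is_succ_gen[OF gp] using gq i0 rel by simp
    then show ?thesis using p Rq_def by simp
  qed
qed

lemma is_pos_init:
  assumes "digraph V E" shows "is_pos g V E ([], V)"
proof (cases "gen_pos g V E ([], V)")
  case True then show ?thesis unfolding is_pos_def by simp
next
  case False
  have "g \<in> {GV, GVSC}"
  proof (rule ccontr)
    assume "g \<notin> {GV, GVSC}"
    then have "g = GI \<or> g = GISC" by (cases g) auto
    then have "gen_pos g V E ([], V)"
      unfolding gen_pos_def succ_closed_def union_sccs_def using scc_of_sub[of E V] by auto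
    then show False using False by simp
  qed
  then show ?thesis using False unfolding is_pos_def special_pos_def by simp
qed

theorem lower_bound:
  assumes dg: "digraph V E" and st: "is_strategy g V E \<sigma>" and win: "winning_strat g V E \<sigma>"
    and uses: "uses_at_most g V E \<sigma> k"
  shows "1 + cr E V \<le> k"
proof (rule ccontr)
  assume "\<not> 1 + cr E V \<le> k"
  then have kc: "k \<le> cr E V" by simp
  define c where "c = cr E V"
  define f where "f = rec_nat ([], V) (\<lambda>i p. (\<sigma> p, if length (\<sigma> p) \<le> c then Rob g V E (\<sigma> p) else {}))"
  have f0: "f 0 = ([], V)" unfolding f_def by simp
  have fS: "\<And>i. f (Suc i) = (\<sigma> (f i), if length (\<sigma> (f i)) \<le> c then Rob g V E (\<sigma> (f i)) else {})"
    unfolding f_def by simp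
  have P: "\<And>i. (\<forall>j<i. length (fst (f j)) \<le> c) \<Longrightarrow> is_pos g V E (f i) \<and>
      (length (fst (f i)) \<le> c \<longrightarrow> Rob g V E (fst (f i)) \<subseteq> snd (f i))"
  proof -
    fix i show "(\<forall>j<i. length (fst (f j)) \<le> c) \<Longrightarrow> is_pos g V E (f i) \<and>
      (length (fst (f i)) \<le> c \<longrightarrow> Rob g V E (fst (f i)) \<subseteq> snd (f i))"
    proof (induction i)
      case 0
      then show ?case using f0 is_pos_init[OF dg, of g] Rob_sub'[OF dg, of g "[]"] by simp
    next
      case (Suc i)
      have li: "length (fst (f i)) \<le> c" using Suc.prems by simp
      have IH: "is_pos g V E (f i)" "Rob g V E (fst (f i)) \<subseteq> snd (f i)" using Suc.IH Suc.prems li by auto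
      have su: "is_succ g V E (f i) (f (Suc i))" using lb_step[OF dg st IH(1) _ IH(2)] li fS c_def by simp
      have "is_pos g V E (f (Suc i))" using is_succ_target[OF su] unfolding is_pos_def by simp
      moreover have "length (fst (f (Suc i))) \<le> c \<longrightarrow> Rob g V E (fst (f (Suc i))) \<subseteq> snd (f (Suc i))"
        using fS[of i] by simp
      ultimately show ?case by simp
    qed
  qed
  have T: "\<And>i. (\<forall>j\<le>i. length (fst (f j)) \<le> c) \<Longrightarrow> is_succ g V E (f i) (f (Suc i))"
  proof -
    fix i assume a: "\<forall>j\<le>i. length (fst (f j)) \<le> c"
    have IH: "is_pos g V E (f i)" "Rob g V E (fst (f i)) \<subseteq> snd (f i)" using P[of i] a by auto
    show "is_succ g V E (f i) (f (Suc i))" using lb_step[OF dg st IH(1) _ IH(2)] a fS c_def by simp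
  qed
  show False
  proof (cases "\<exists>N. c < length (fst (f N))")
    case True
    define N where "N = (LEAST N. c < length (fst (f N)))"
    have N1: "c < length (fst (f N))" using LeastI_ex[OF True] N_def by simp
    have N2: "\<And>j. j < N \<Longrightarrow> length (fst (f j)) \<le> c" using not_less_Least N_def by (metis not_less)
    have "N \<noteq> 0" using N1 f0 by (metis fst_conv gr_implies_not0 list.size(3))
    then obtain m where m: "N = Suc m" using not0_implies_Suc by blast
    have cs: "complete_consistent_search g V E \<sigma> f (Some N)"
      unfolding complete_consistent_search_def idx_def
    proof (intro conjI)
      show "f 0 = ([], V)" by (rule f0)
    next
      show "\<forall>i\<in>(case Some N of None \<Rightarrow> UNIV | Some n \<Rightarrow> {..n}). is_pos g V E (f i)"
      proof
        fix i assume "i \<in> (case Some N of None \<Rightarrow> UNIV | Some n \<Rightarrow> {..n})"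
        then have "i \<le> N" by simp
        then show "is_pos g V E (f i)" using P[of i] N2 by auto
      qed
    next
      show "\<forall>i. Suc i \<in> (case Some N of None \<Rightarrow> UNIV | Some n \<Rightarrow> {..n}) \<longrightarrow>
          is_succ g V E (f i) (f (Suc i)) \<and> fst (f (Suc i)) = \<sigma> (f i)"
      proof (intro allI impI)
        fix i assume "Suc i \<in> (case Some N of None \<Rightarrow> UNIV | Some n \<Rightarrow> {..n})"
        then have "Suc i \<le> N" by simp
        then have "is_succ g V E (f i) (f (Suc i))" using T[of i] N2 by auto
        then show "is_succ g V E (f i) (f (Suc i)) \<and> fst (f (Suc i)) = \<sigma> (f i)" using fS[of i] by simp
      qed
    next
      have "snd (f N) = {}" using N1 fS[of m] m by simp
      then show "Some N = None \<or> (\<exists>i\<in>(case Some N of None \<Rightarrow> UNIV | Some n \<Rightarrow> {..n}). snd (f i) = {})"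
        by auto
    qed
    have "length (fst (f N)) \<le> k" using uses cs unfolding uses_at_most_def idx_def by auto
    then show False using N1 kc c_def by simp
  next
    case False
    then have all: "\<And>j. length (fst (f j)) \<le> c" by (simp add: not_less)
    have cs: "complete_consistent_search g V E \<sigma> f None"
      unfolding complete_consistent_search_def idx_def
      using f0 P all T fS by simp
    then have "\<exists>i\<in>idx None. snd (f i) = {}" using win unfolding winning_strat_def by blast
    then obtain i where i: "snd (f i) = {}" unfolding idx_def by auto
    have "Rob g V E (fst (f i)) \<subseteq> snd (f i)" using P[of i] all by simp
    moreover have "Hs V E (fst (f i)) \<noteq> {}" using Hs_cr[OF dg] all c_def by simp
    ultimately show False using i Hs_Rob[OF dg, of "fst (f i)" g] by blast
  qed
qed


lemma lifo_eq: "digraph V E \<Longrightarrow> lifo g V E = 1 + cr E V"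
  unfolding lifo_def
proof (rule Least_equality)
  assume dg: "digraph V E"
  show "\<exists>\<sigma>. is_strategy g V E \<sigma> \<and> winning_strat g V E \<sigma> \<and> uses_at_most g V E \<sigma> (1 + cr E V)"
    using upper_bound[OF dg, of g] by blast
  show "\<And>k. \<exists>\<sigma>. is_strategy g V E \<sigma> \<and> winning_strat g V E \<sigma> \<and> uses_at_most g V E \<sigma> k \<Longrightarrow> 1 + cr E V \<le> k"
    using lower_bound[OF dg] by blast
qed

lemma lifo_m_eq: "digraph V E \<Longrightarrow> lifo_m g V E = 1 + cr E V"
  unfolding lifo_m_def
proof (rule Least_equality)
  assume dg: "digraph V E"
  show "\<exists>\<sigma>. is_strategy g V E \<sigma> \<and> winning_strat g V E \<sigma> \<and> monotone_strat g V E \<sigma> \<and> uses_at_most g V E \<sigma> (1 + cr E V)"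
    using upper_bound[OF dg, of g] by blast
  show "\<And>k. \<exists>\<sigma>. is_strategy g V E \<sigma> \<and> winning_strat g V E \<sigma> \<and> monotone_strat g V E \<sigma> \<and> uses_at_most g V E \<sigma> k \<Longrightarrow> 1 + cr E V \<le> k"
    using lower_bound[OF dg] by blast
qed

lemma sstat_eq: "digraph V E \<Longrightarrow> sstat_vsc V E = 1 + cr E V"
  unfolding sstat_vsc_def
proof (rule Least_equality)
  assume dg: "digraph V E"
  show "\<exists>\<sigma>. is_strategy GVSC V E \<sigma> \<and> winning_strat GVSC V E \<sigma> \<and> stationary_strat GVSC V E \<sigma> \<and> uses_at_most GVSC V E \<sigma> (1 + cr E V)"
    using upper_bound[OF dg, of GVSC] by blast
  show "\<And>k. \<exists>\<sigma>. is_strategy GVSC V E \<sigma> \<and> winning_strat GVSC V E \<sigma> \<and> stationary_strat GVSC V E \<sigma> \<and> uses_at_most GVSC V E \<sigma> k \<Longrightarrow> 1 + cr E V \<le> k"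
    using lower_bound[OF dg] by blast
qed

theorem theorem1:
  fixes V :: "'a set" and E :: "('a \<times> 'a) set"
  assumes "digraph V E"
  shows "1 + cr E V = lifo_m GI V E \<and> lifo_m GI V E = lifo GI V E \<and>
         lifo GI V E = lifo_m GISC V E \<and> lifo_m GISC V E = lifo GISC V E \<and>
         lifo GISC V E = lifo_m GV V E \<and> lifo_m GV V E = lifo GV V E \<and>
         lifo GV V E = lifo_m GVSC V E \<and> lifo_m GVSC V E = lifo GVSC V E \<and>
         lifo GVSC V E = sstat_vsc V E"
  using lifo_eq[OF assms] lifo_m_eq[OF assms] sstat_eq[OF assms] by simp



end
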